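(* Let $\|\mathbf{f}(\mathbf{x})\|\le R$ and $\|\mathbf{g}(\mathbf{x}')\|\le R$ almost surely for some $R>0$. Let $\mathsf{V}_{\mathbf{f}}\triangleq\mathbb{E}_{\rho_0(\mathbf{x})}[(\mathbf{f}(\mathbf{x})\mathbf{f}(\mathbf{x})^\intercal-\mathsf{M}_{\rho_0}[\mathbf{f}])^2]\in\mathbb{R}^{k\times k}$ and $\mathsf{V}_{\mathbf{g}}\triangleq\mathbb{E}_{\rho_1(\mathbf{x}')}[(\mathbf{g}(\mathbf{x}')\mathbf{g}(\mathbf{x}')^\intercal-\mathsf{M}_{\rho_1}[\mathbf{g}])^2]\in\mathbb{R}^{k\times k}$, and for $\mathsf{V}\succeq0$ let $r(\mathsf{V})\triangleq\tr(\mathsf{V})/\|\mathsf{V}\|_{\mathrm{op}}$ denote its intrinsic dimension. Then, for any $\delta\in(0,1)$, with probability at least $1-\delta$, $$|\hat{\mathcal{L}}-\mathcal{L}|\le R^2\Biggl\{\sqrt{\frac{16}{N}\log\frac{6}{\delta}}+\frac{8}{3N}\log\frac{6}{\delta}+\sqrt{\frac{2\|\mathsf{V}_{\mathbf{f}}\|_{\mathrm{op}}}{N_0}\log\frac{12r(\mathsf{V}_{\mathbf{f}})}{\delta}}+\frac{2R^2}{3N_0}\log\frac{12r(\mathsf{V}_{\mathbf{f}})}{\delta}+\sqrt{\frac{2\|\mathsf{V}_{\mathbf{g}}\|_{\mathrm{op}}}{N_1}\log\frac{12r(\mathsf{V}_{\mathbf{g}})}{\delta}}+\frac{2R^2}{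3N_1}\log\frac{12r(\mathsf{V}_{\mathbf{g}})}{\delta}\Biggr\}.$$
   Context: Let $p(\mathbf{x}'|\mathbf{x})$ be the transition density of a time-homogeneous Markov process on $\mathcal{X}\subseteq\mathbb{R}^d$ and $\rho_0,\rho_1$ the distributions of current and future states. For $\mathbf{f},\mathbf{g}\colon\mathcal{X}\to\mathbb{R}^k$, define the second-moment matrices $\mathsf{M}_{\rho_0}[\mathbf{f}]\triangleq\mathbb{E}_{\rho_0(\mathbf{x})}[\mathbf{f}(\mathbf{x})\mathbf{f}(\mathbf{x})^\intercal]$, $\mathsf{M}_{\rho_1}[\mathbf{g}]\triangleq\mathbb{E}_{\rho_1(\mathbf{x}')}[\mathbf{g}(\mathbf{x}')\mathbf{g}(\mathbf{x}')^\intercal]$, and the joint second-moment matrix $\mathsf{T}[\mathbf{f},\mathbf{g}]\triangleq\mathbb{E}_{\rho_0(\mathbf{x})p(\mathbf{x}'|\mathbf{x})}[\mathbf{f}(\mathbf{x})\mathbf{g}(\mathbf{x}')^\intercal]$. The population low-rank approximation (LoRA) objective is $\mathcal{L}=\mathcal{L}_{\mathsf{lora}}(\mathbf{f},\mathbf{g})\triangleq-2\tr(\mathsf{T}[\mathbf{f},\mathbf{g}])+\tr(\mathsf{M}_{\rho_0}[\mathbf{f}]\mathsf{M}_{\rho_1}[\mathbf{g}])$, and $\hat{\mathcal{L}}$ is the same expression with each matrix replaced by its empirical estimate: $\hat{\mathsf{T}}[\mathbf{f},\mathbf{g}]\triangleq\frac1N\sum_{t=1}^N\mathbf{f}(\mathbf{x}_t)\mathbf{g}(\mathbf{x}_t')^\intercal$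 with $(\mathbf{x}_t,\mathbf{x}_t')$ i.i.d. from $\rho_0(\mathbf{x})p(\mathbf{x}'|\mathbf{x})$; $\hat{\mathsf{M}}_{\rho_0}[\mathbf{f}]\triangleq\frac1{N_0}\sum_{i=1}^{N_0}\mathbf{f}(\breve{\mathbf{x}}_i)\mathbf{f}(\breve{\mathbf{x}}_i)^\intercal$ with $\breve{\mathbf{x}}_i$ i.i.d. from $\rho_0$; and $\hat{\mathsf{M}}_{\rho_1}[\mathbf{g}]\triangleq\frac1{N_1}\sum_{j=1}^{N_1}\mathbf{g}(\breve{\mathbf{x}}_j')\mathbf{g}(\breve{\mathbf{x}}_j')^\intercal$ with $\breve{\mathbf{x}}_j'$ i.i.d. from $\rho_1$, the samples $\{\breve{\mathbf{x}}_i\}$ and $\{\breve{\mathbf{x}}_j'\}$ being independent of each other. *)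

theory Defs
  imports "HOL-Probability.Probability"
begin

definition outer :: "real^'k \<Rightarrow> real^'k \<Rightarrow> real^'k^'k" where
  "outer u v = (\<chi> i j. u $ i * v $ j)"

definition opnorm :: "real^'k^'k \<Rightarrow> real" where
  "opnorm A = onorm (\<lambda>x. A *v x)"

definition intdim :: "real^'k^'k \<Rightarrow> real" where
  "intdim V = trace V / opnorm V"

text \<open>Joint law rho0(x) p(x'|x) of (current, future) state; p is a transition
  density w.r.t. Lebesgue measure on the state space X \<subseteq> R^d.\<close>
definition markov_joint ::
  "(real^'d) measure \<Rightarrow> (real^'d \<Rightarrow> real^'d \<Rightarrow> real) \<Rightarrow> (real^'d) set
     \<Rightarrow> ((real^'d) \<times> (real^'d)) measure" where
  "markov_joint \<rho>0 p X =
     density (\<rho>0 \<Otimes>\<^sub>M lborel) (\<lambda>(x, x'). ennreal (indicator X x' * p x x'))"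

definition future_dist :: "((real^'d) \<times> (real^'d)) measure \<Rightarrow> (real^'d) measure" where
  "future_dist J = distr J borel snd"

definition sec_mom :: "(real^'d) measure \<Rightarrow> (real^'d \<Rightarrow> real^'k) \<Rightarrow> real^'k^'k" where
  "sec_mom \<rho> f = (\<integral>x. outer (f x) (f x) \<partial>\<rho>)"

definition cross_mom :: "((real^'d) \<times> (real^'d)) measure \<Rightarrow> (real^'d \<Rightarrow> real^'k)
     \<Rightarrow> (real^'d \<Rightarrow> real^'k) \<Rightarrow> real^'k^'k" where
  "cross_mom J f g = (\<integral>z. outer (f (fst z)) (g (snd z)) \<partial>J)"

definition lora :: "((real^'d) \<times> (real^'d)) measure \<Rightarrow> (real^'d) measure \<Rightarrow> (real^'d) measure
     \<Rightarrow> (real^'d \<Rightarrow> real^'k) \<Rightarrow> (real^'d \<Rightarrow> real^'k) \<Rightarrow> real" where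
  "lora J \<rho>0 \<rho>1 f g = - 2 * trace (cross_mom J f g) + trace (sec_mom \<rho>0 f ** sec_mom \<rho>1 g)"

definition var_mat :: "(real^'d) measure \<Rightarrow> (real^'d \<Rightarrow> real^'k) \<Rightarrow> real^'k^'k" where
  "var_mat \<rho> f = (\<integral>x. (outer (f x) (f x) - sec_mom \<rho> f) ** (outer (f x) (f x) - sec_mom \<rho> f) \<partial>\<rho>)"

definition emp_cross :: "(real^'d \<Rightarrow> real^'k) \<Rightarrow> (real^'d \<Rightarrow> real^'k)
     \<Rightarrow> (nat \<Rightarrow> (real^'d) \<times> (real^'d)) \<Rightarrow> nat \<Rightarrow> real^'k^'k" where
  "emp_cross f g zs N = (1 / real N) *\<^sub>R (\<Sum>t<N. outer (f (fst (zs t))) (g (snd (zs t))))"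

definition emp_mom :: "(real^'d \<Rightarrow> real^'k) \<Rightarrow> (nat \<Rightarrow> real^'d) \<Rightarrow> nat \<Rightarrow> real^'k^'k" where
  "emp_mom f xs n = (1 / real n) *\<^sub>R (\<Sum>i<n. outer (f (xs i)) (f (xs i)))"

definition emp_lora :: "(real^'d \<Rightarrow> real^'k) \<Rightarrow> (real^'d \<Rightarrow> real^'k)
     \<Rightarrow> (nat \<Rightarrow> (real^'d) \<times> (real^'d)) \<Rightarrow> nat \<Rightarrow> (nat \<Rightarrow> real^'d) \<Rightarrow> nat
     \<Rightarrow> (nat \<Rightarrow> real^'d) \<Rightarrow> nat \<Rightarrow> real" where
  "emp_lora f g zs N xs N0 ys N1 =
     - 2 * trace (emp_cross f g zs N) + trace (emp_mom f xs N0 ** emp_mom g ys N1)"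

end

theory Submission
  imports Defs "HOL-Probability.Probability"
begin

lemma exp_aux_pos:
  fixes x :: real assumes "x \<ge> 0"
  shows "exp x * (1 - x/3) \<le> 1 + 2*x/3 + x\<^sup>2/6"
proof -
  define h' where "h' = (\<lambda>x::real. 2/3 + x/3 - exp x * (2/3 - x/3))"
  define h where "h = (\<lambda>x::real. 1 + 2*x/3 + x\<^sup>2/6 - exp x * (1 - x/3))"
  have d2: "DERIV h' y :> (1/3 - exp y * (1 - y) / 3)" for y :: real
    unfolding h'_def by (auto intro!: derivative_eq_intros simp: field_simps)
  have d1: "DERIV h y :> h' y" for y :: real
    unfolding h_def h'_def by (auto intro!: derivative_eq_intros simp: field_simps power2_eq_square)
  have nn: "0 \<le> 1/3 - exp y * (1 - y) / 3" for y :: real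
  proof -
    have "1 - y \<le> exp (-y)" using exp_ge_add_one_self[of "-y"] by simp
    hence "exp y * (1 - y) \<le> exp y * exp (-y)" by (intro mult_left_mono) auto
    thus ?thesis by (simp add: exp_minus field_simps)
  qed
  have "h' 0 \<le> h' y" if "y \<ge> 0" for y :: real
    by (rule DERIV_nonneg_imp_nondecreasing[OF that]) (use d2 nn in blast)
  hence "h' y \<ge> 0" if "y \<ge> 0" for y :: real using that by (simp add: h'_def)
  hence "h 0 \<le> h x"
    by (intro DERIV_nonneg_imp_nondecreasing[OF assms]) (use d1 in blast)
  thus ?thesis by (simp add: h_def)
qed

lemma exp_aux_neg:
  fixes x :: real assumes "x \<le> 0"
  shows "exp x \<le> 1 + x + x\<^sup>2/2"
proof -
  define k where "k = (\<lambda>x::real. 1 + x + x\<^sup>2/2 - exp x)"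
  have d: "DERIV k y :> 1 + y - exp y" for y :: real
    unfolding k_def by (auto intro!: derivative_eq_intros simp: field_simps power2_eq_square)
  have "k x \<ge> k 0"
    by (rule DERIV_nonpos_imp_nonincreasing[OF assms]) (use d exp_ge_add_one_self in fastforce)
  thus ?thesis by (simp add: k_def)
qed

lemma exp_bern:
  fixes x c :: real assumes "0 \<le> c" "c < 3" "x \<le> c"
  shows "exp x \<le> 1 + x + x\<^sup>2 / (2 * (1 - c/3))"
proof (cases "x \<le> 0")
  case True
  have "x\<^sup>2/2 \<le> x\<^sup>2 / (2 * (1 - c/3))"
    using assms by (intro divide_left_mono) (auto simp: mult_pos_pos)
  thus ?thesis using exp_aux_neg[OF True] by linarith
next
  case False
  hence x: "x > 0" "x < 3" using assms by auto
  have "exp x * (1 - x/3) \<le> 1 + 2*x/3 + x\<^sup>2/6" by (rule exp_aux_pos) (use x in auto)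
  also have "\<dots> = (1 + x + x\<^sup>2/(2*(1-x/3))) * (1 - x/3)" using x by (simp add: field_simps power2_eq_square)
  finally have "exp x \<le> 1 + x + x\<^sup>2/(2*(1-x/3))" using x by simp
  also have "x\<^sup>2/(2*(1-x/3)) \<le> x\<^sup>2/(2*(1-c/3))"
    using assms x by (intro divide_left_mono) auto
  finally show ?thesis by simp
qed

lemma (in prob_space) bern_mgf:
  assumes [measurable]: "random_variable borel Y"
    and bd: "AE x in M. \<bar>Y x\<bar> \<le> b" and b: "b > 0"
    and E0: "expectation Y = 0" and var: "expectation (\<lambda>x. (Y x)\<^sup>2) \<le> s"
    and l: "0 < l" "l * b < 3"
  shows "(\<integral>\<^sup>+x. ennreal (exp (l * Y x)) \<partial>M) \<le> ennreal (exp (l\<^sup>2 * s / (2 * (1 - l*b/3))))"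
proof -
  define c where "c = l * b"
  have c: "0 \<le> c" "c < 3" using l b by (auto simp: c_def)
  have intY: "integrable M Y"
    by (rule integrable_const_bound[where B=b]) (use bd in auto)
  have intY2: "integrable M (\<lambda>x. (Y x)\<^sup>2)"
    by (rule integrable_const_bound[where B="b\<^sup>2"])
       (use bd in \<open>auto elim!: eventually_mono simp: power2_le_iff_abs_le\<close>)
  have intE: "integrable M (\<lambda>x. exp (l * Y x))"
  proof (rule integrable_const_bound[where B="exp (l*b)"])
    show "AE x in M. norm (exp (l * Y x)) \<le> exp (l * b)"
      using bd by eventually_elim (use l in auto)
  qed auto
  have eq: "(\<integral>\<^sup>+x. ennreal (exp (l * Y x)) \<partial>M) = ennreal (expectation (\<lambda>x. exp (l * Y x)))"
    by (rule nn_integral_eq_integral[OF intE]) auto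
  have "expectation (\<lambda>x. exp (l * Y x)) \<le> expectation (\<lambda>x. 1 + l * Y x + (l * Y x)\<^sup>2 / (2 * (1 - c/3)))"
  proof (rule integral_mono_AE[OF intE])
    show "integrable M (\<lambda>x. 1 + l * Y x + (l * Y x)\<^sup>2 / (2 * (1 - c/3)))"
      using intY intY2 by (auto simp: power_mult_distrib)
    show "AE x in M. exp (l * Y x) \<le> 1 + l * Y x + (l * Y x)\<^sup>2 / (2 * (1 - c / 3))"
      using bd
    proof eventually_elim
      case (elim x)
      have "l * Y x \<le> c" unfolding c_def using elim l by (intro mult_left_mono) auto
      thus ?case by (rule exp_bern[OF c])
    qed
  qed
  also have "\<dots> = 1 + l * expectation Y + l\<^sup>2 * expectation (\<lambda>x. (Y x)\<^sup>2) / (2 * (1 - c/3))"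
    using intY intY2 by (simp add: power_mult_distrib prob_space)
  also have "\<dots> \<le> 1 + l\<^sup>2 * s / (2 * (1 - c/3))"
    using E0 var c by (auto intro!: divide_right_mono mult_left_mono)
  also have "\<dots> \<le> exp (l\<^sup>2 * s / (2 * (1 - c/3)))" by (rule exp_ge_add_one_self)
  finally show ?thesis unfolding eq c_def by (intro ennreal_leI)
qed

lemma (in prob_space) bernstein_ge:
  assumes fin: "finite I" and ne: "I \<noteq> {}" and indep: "indep_vars (\<lambda>_. borel) Y I"
    and bd: "\<And>i. i \<in> I \<Longrightarrow> AE x in M. \<bar>Y i x\<bar> \<le> b" and b: "b > 0"
    and E0: "\<And>i. i \<in> I \<Longrightarrow> expectation (Y i) = 0"
    and var: "\<And>i. i \<in> I \<Longrightarrow> expectation (\<lambda>x. (Y i x)\<^sup>2) \<le> s"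
    and s: "s > 0" and e: "\<epsilon> > 0"
  shows "prob {x\<in>space M. (\<Sum>i\<in>I. Y i x) \<ge> \<epsilon>} \<le> exp (-(\<epsilon>\<^sup>2) / (2 * (real (card I) * s + b * \<epsilon> / 3)))"
proof -
  define n where "n = real (card I)"
  have n: "n > 0" using fin ne by (simp add: n_def card_gt_0_iff)
  define D where "D = n * s + b * \<epsilon> / 3"
  have D: "D > 0" using n s b e by (simp add: D_def add_pos_pos)
  define l where "l = \<epsilon> / D"
  have l: "l > 0" using e D by (simp add: l_def)
  have lb: "l * b < 3"
  proof -
    have "b * \<epsilon> < 3 * D" using n s by (simp add: D_def)
    thus ?thesis using D by (simp add: l_def field_simps)
  qed
  have rv[measurable]: "\<And>i. i \<in> I \<Longrightarrow> random_variable borel (Y i)"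
    using indep unfolding indep_vars_def by blast
  have "ennreal (prob {x\<in>space M. (\<Sum>i\<in>I. Y i x) \<ge> \<epsilon>}) = emeasure M {x\<in>space M. (\<Sum>i\<in>I. Y i x) \<ge> \<epsilon>}"
    by (simp add: emeasure_eq_measure)
  also have "\<dots> \<le> ennreal (exp (-l*\<epsilon>)) * (\<integral>\<^sup>+x\<in>space M. exp (l * (\<Sum>i\<in>I. Y i x)) \<partial>M)"
    by (intro Chernoff_ineq_nn_integral_ge l) (auto intro!: borel_measurable_sum simp: rv)
  also have "(\<integral>\<^sup>+x\<in>space M. exp (l * (\<Sum>i\<in>I. Y i x)) \<partial>M) =
             (\<integral>\<^sup>+x. (\<Prod>i\<in>I. ennreal (exp (l * Y i x))) \<partial>M)"
    by (intro nn_integral_cong)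
       (simp_all add: sum_distrib_left exp_sum fin prod_ennreal)
  also have "\<dots> = (\<Prod>i\<in>I. \<integral>\<^sup>+x. ennreal (exp (l * Y i x)) \<partial>M)"
    by (intro indep_vars_nn_integral fin indep_vars_compose2[OF indep]) auto
  also have "ennreal (exp (-l * \<epsilon>)) * \<dots> \<le>
               ennreal (exp (-l * \<epsilon>)) * (\<Prod>i\<in>I. ennreal (exp (l\<^sup>2 * s / (2 * (1 - l*b/3)))))"
  proof (intro mult_left_mono prod_mono_ennreal)
    fix i assume i: "i \<in> I"
    show "(\<integral>\<^sup>+x. ennreal (exp (l * Y i x)) \<partial>M) \<le> ennreal (exp (l\<^sup>2 * s / (2 * (1 - l*b/3))))"
      by (rule bern_mgf[OF rv[OF i] bd[OF i] b E0[OF i] var[OF i] l lb])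
  qed auto
  also have "\<dots> = ennreal (exp (-l*\<epsilon>) * (\<Prod>i\<in>I. exp (l\<^sup>2 * s / (2 * (1 - l*b/3)))))"
    by (simp add: prod_ennreal prod_nonneg ennreal_power flip: ennreal_mult)
  also have "exp (-l*\<epsilon>) * (\<Prod>i\<in>I. exp (l\<^sup>2 * s / (2 * (1 - l*b/3)))) = exp (n * (l\<^sup>2 * s / (2 * (1 - l*b/3))) - l * \<epsilon>)"
    by (simp add: exp_diff exp_minus exp_sum fin n_def field_simps flip: exp_of_nat_mult)
  also have "n * (l\<^sup>2 * s / (2 * (1 - l*b/3))) - l * \<epsilon> = -(\<epsilon>\<^sup>2) / (2 * D)"
  proof -
    have q: "1 - l*b/3 = n * s / D" using D by (simp add: l_def D_def field_simps)
    have "n * (l\<^sup>2 * s / (2 * (n * s / D))) = l\<^sup>2 * D / 2" using n s D by (simp add: field_simps)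
    hence "n * (l\<^sup>2 * s / (2 * (1 - l*b/3))) = l\<^sup>2 * D / 2" by (simp only: q)
    thus ?thesis using D by (simp add: l_def field_simps power2_eq_square)
  qed
  finally show ?thesis
    by (subst (asm) ennreal_le_iff) (simp_all add: D_def n_def)
qed

lemma (in prob_space) bernstein_conf:
  assumes fin: "finite I" and ne: "I \<noteq> {}" and indep: "indep_vars (\<lambda>_. borel) Y I"
    and bd: "\<And>i. i \<in> I \<Longrightarrow> AE x in M. \<bar>Y i x\<bar> \<le> b" and b: "b > 0"
    and E0: "\<And>i. i \<in> I \<Longrightarrow> expectation (Y i) = 0"
    and var: "\<And>i. i \<in> I \<Longrightarrow> expectation (\<lambda>x. (Y i x)\<^sup>2) \<le> s"
    and s: "s > 0" and ell: "ell > 0"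
  shows "prob {x\<in>space M. \<bar>\<Sum>i\<in>I. Y i x\<bar> \<le> real (card I) *
            (sqrt (2 * s * ell / real (card I)) + 2 * b * ell / (3 * real (card I)))} \<ge> 1 - 2 * exp (-ell)"
proof -
  define n where "n = real (card I)"
  have n: "n > 0" using fin ne by (simp add: n_def card_gt_0_iff)
  define t where "t = sqrt (2 * s * ell / n) + 2 * b * ell / (3 * n)"
  have t: "t > 0" using n s ell b unfolding t_def by (intro add_pos_pos) auto
  define \<epsilon> where "\<epsilon> = n * t"
  have e: "\<epsilon> > 0" using n t by (simp add: \<epsilon>_def)
  have key: "ell \<le> \<epsilon>\<^sup>2 / (2 * (n * s + b * \<epsilon> / 3))"
  proof -
    define a where "a = sqrt (2 * s * ell / n)"
    define c where "c = 2 * b * ell / (3 * n)"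
    have a0: "a \<ge> 0" "a\<^sup>2 = 2 * s * ell / n" using s ell n by (auto simp: a_def)
    have c0: "c \<ge> 0" using b ell n by (simp add: c_def)
    have "t\<^sup>2 \<ge> a\<^sup>2 + c * t" unfolding t_def a_def[symmetric] c_def[symmetric]
      using a0 c0 by (simp add: power2_eq_square algebra_simps)
    hence "n * t\<^sup>2 \<ge> n * (a\<^sup>2 + c * t)" using n by (intro mult_left_mono) auto
    also have "n * (a\<^sup>2 + c * t) = 2 * ell * (s + b * t / 3)" using n by (simp add: a0 c_def field_simps)
    finally have *: "2 * ell * (s + b * t / 3) \<le> n * t\<^sup>2" .
    have pos: "s + b * t / 3 > 0" using s b t by (simp add: add_pos_pos)
    have "n * s + b * \<epsilon> / 3 = n * (s + b * t / 3)" by (simp add: \<epsilon>_def algebra_simps)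
    hence "\<epsilon>\<^sup>2 / (2 * (n * s + b * \<epsilon> / 3)) = (n * (n * t\<^sup>2)) / (n * (2 * (s + b * t / 3)))"
      by (simp add: \<epsilon>_def power2_eq_square algebra_simps)
    also have "\<dots> = n * t\<^sup>2 / (2 * (s + b * t / 3))" using n by (simp only: mult_divide_mult_cancel_left_if) simp
    also have "ell \<le> \<dots>" using * pos by (simp add: field_simps)
    finally show ?thesis by simp
  qed
  have rv[measurable]: "\<And>i. i \<in> I \<Longrightarrow> random_variable borel (Y i)"
    using indep unfolding indep_vars_def by blast
  define U1 where "U1 = {x\<in>space M. (\<Sum>i\<in>I. Y i x) \<ge> \<epsilon>}"
  define U2 where "U2 = {x\<in>space M. (\<Sum>i\<in>I. - Y i x) \<ge> \<epsilon>}"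
  have ev: "U1 \<in> events" "U2 \<in> events" unfolding U1_def U2_def by (auto intro!: borel_measurable_sum simp: rv)
  have p1: "prob U1 \<le> exp (-ell)"
  proof -
    have "prob U1 \<le> exp (-(\<epsilon>\<^sup>2) / (2 * (n * s + b * \<epsilon> / 3)))"
      unfolding U1_def n_def by (rule bernstein_ge[OF fin ne indep bd b E0 var s e])
    also have "\<dots> \<le> exp (-ell)" using key by simp
    finally show ?thesis .
  qed
  have p2: "prob U2 \<le> exp (-ell)"
  proof -
    have "prob U2 \<le> exp (-(\<epsilon>\<^sup>2) / (2 * (n * s + b * \<epsilon> / 3)))"
      unfolding U2_def n_def
    proof (rule bernstein_ge[OF fin ne _ _ b _ _ s e])
      show "indep_vars (\<lambda>_. borel) (\<lambda>i x. - Y i x) I"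
        by (rule indep_vars_compose2[OF indep]) auto
      show "AE x in M. \<bar>- Y i x\<bar> \<le> b" if "i \<in> I" for i using bd[OF that] by simp
      show "expectation (\<lambda>x. - Y i x) = 0" if "i \<in> I" for i using E0[OF that] by simp
      show "expectation (\<lambda>x. (- Y i x)\<^sup>2) \<le> s" if "i \<in> I" for i using var[OF that] by simp
    qed
    also have "\<dots> \<le> exp (-ell)" using key by simp
    finally show ?thesis .
  qed
  have "space M - (U1 \<union> U2) \<subseteq> {x\<in>space M. \<bar>\<Sum>i\<in>I. Y i x\<bar> \<le> n * t}"
    unfolding U1_def U2_def \<epsilon>_def by (auto simp: sum_negf)
  hence "prob (space M - (U1 \<union> U2)) \<le> prob {x\<in>space M. \<bar>\<Sum>i\<in>I. Y i x\<bar> \<le> n * t}"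
    by (intro finite_measure_mono) (auto intro!: borel_measurable_sum simp: rv)
  moreover have "prob (space M - (U1 \<union> U2)) = 1 - prob (U1 \<union> U2)"
    using ev by (intro prob_compl) auto
  moreover have "prob (U1 \<union> U2) \<le> prob U1 + prob U2" using ev by (intro measure_Un_le) auto
  ultimately show ?thesis using p1 p2 unfolding n_def t_def by linarith
qed

lemma outer_nth[simp]: "outer u v $ i $ j = u$i * v$j" by (simp add: outer_def)

lemma trace_mm: "trace ((A::real^'k^'k) ** B) = (\<Sum>i\<in>UNIV. \<Sum>j\<in>UNIV. A$i$j * B$j$i)"
  by (simp add: trace_def matrix_matrix_mult_def)

lemma qf_comp: "(v::real^'k) \<bullet> (A *v v) = (\<Sum>i\<in>UNIV. \<Sum>j\<in>UNIV. v$i * A$i$j * v$j)"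
  by (simp add: inner_vec_def matrix_vector_mult_def sum_distrib_left mult.assoc)

lemma trace_outer_left: "trace (outer u u ** X) = (u::real^'k) \<bullet> (X *v u)"
  unfolding trace_mm qf_comp
  by (rule trans[OF _ sum.swap]) (intro sum.cong refl, simp)

lemma trace_outer_right: "trace (X ** outer u u) = (u::real^'k) \<bullet> (X *v u)"
  by (subst trace_mul_sym) (rule trace_outer_left)

lemma outer_mv: "outer u v *v w = ((v::real^'k) \<bullet> w) *\<^sub>R (u::real^'k)"
  unfolding vec_eq_iff matrix_vector_mult_def inner_vec_def
  by (auto simp: sum_distrib_right sum_distrib_left mult_ac intro!: sum.cong)

lemma qf_outer: "w \<bullet> (outer u u *v w) = ((u::real^'k) \<bullet> w)\<^sup>2"
  by (simp add: outer_mv power2_eq_square inner_commute)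

lemma bl_trace_left: "bounded_linear (\<lambda>Y::real^'k^'k. trace (Y ** X))"
  unfolding linear_linear
  by (rule linearI) (simp_all add: trace_mm sum.distrib sum_distrib_left algebra_simps)

lemma bl_trace_right: "bounded_linear (\<lambda>Y::real^'k^'k. trace (X ** Y))"
  unfolding linear_linear
  by (rule linearI) (simp_all add: trace_mm sum.distrib sum_distrib_left algebra_simps)

lemma bl_qf: "bounded_linear (\<lambda>Y::real^'k^'k. v \<bullet> (Y *v v))"
  unfolding linear_linear
  by (rule linearI) (simp_all add: qf_comp sum.distrib sum_distrib_left algebra_simps)

lemma bl_nth: "bounded_linear (\<lambda>Y::real^'k^'k. Y $ i $ j)"
  unfolding linear_linear
  by (rule linearI) simp_all

lemma cont_outer[continuous_intros]:
  "continuous_on S f \<Longrightarrow> continuous_on S g \<Longrightarrow> continuous_on S (\<lambda>x. outer (f x :: real^'k) (g x))"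
  unfolding outer_def by (intro continuous_intros)

lemma cont_mm[continuous_intros]:
  "continuous_on S f \<Longrightarrow> continuous_on S g \<Longrightarrow> continuous_on S (\<lambda>x. (f x :: real^'k^'k) ** g x)"
  unfolding matrix_matrix_mult_def by (intro continuous_intros)

lemma cont_mv[continuous_intros]:
  "continuous_on S f \<Longrightarrow> continuous_on S g \<Longrightarrow> continuous_on S (\<lambda>x. (f x :: real^'k^'k) *v g x)"
  unfolding matrix_vector_mult_def by (intro continuous_intros)

lemma cont_trace[continuous_intros]:
  "continuous_on S f \<Longrightarrow> continuous_on S (\<lambda>x. trace (f x :: real^'k^'k))"
  unfolding trace_def by (intro continuous_intros)

lemma qf_diff: "v \<bullet> ((A - B) *v v) = v \<bullet> (A *v v) - v \<bullet> ((B::real^'k^'k) *v v)"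
  by (simp add: matrix_vector_mult_diff_rdistrib inner_diff_right)

definition symm :: "real^'k^'k \<Rightarrow> bool" where "symm C \<longleftrightarrow> (\<forall>i j. C$i$j = C$j$i)"

lemma symm_transpose: "symm C \<Longrightarrow> transpose C = C"
  by (simp add: symm_def transpose_def vec_eq_iff)

lemma qf_sq: assumes "symm C" shows "v \<bullet> ((C ** C) *v v) = (norm (C *v v))\<^sup>2"
proof -
  have "v \<bullet> ((C ** C) *v v) = v \<bullet> (C *v (C *v v))" by (simp add: matrix_vector_mul_assoc)
  also have "\<dots> = (v v* C) \<bullet> (C *v v)" by (simp add: dot_lmul_matrix)
  also have "v v* C = C *v v" using symm_transpose[OF assms]
    by (metis transpose_matrix_vector)
  finally show ?thesis by (simp add: power2_norm_eq_inner)
qed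

lemma qf_sq_nonneg: "symm C \<Longrightarrow> v \<bullet> ((C ** C) *v v) \<ge> 0"
  by (simp add: qf_sq)

lemma qf_bound_sq: assumes "symm C" shows "(v \<bullet> (C *v v))\<^sup>2 \<le> (norm v)\<^sup>2 * (v \<bullet> ((C ** C) *v v))"
proof -
  have "\<bar>v \<bullet> (C *v v)\<bar> \<le> norm v * norm (C *v v)" by (rule Cauchy_Schwarz_ineq2)
  hence "(v \<bullet> (C *v v))\<^sup>2 \<le> (norm v * norm (C *v v))\<^sup>2"
    using power2_le_iff_abs_le[of "norm v * norm (C *v v)" "v \<bullet> (C *v v)"] by simp
  thus ?thesis by (simp add: qf_sq[OF assms] power_mult_distrib)
qed

lemma qf_opnorm: "(v::real^'k) \<bullet> (V *v v) \<le> opnorm V * (norm v)\<^sup>2"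
proof -
  have bl: "bounded_linear (\<lambda>x. (V::real^'k^'k) *v x)"
    using matrix_vector_mul_linear linear_linear by blast
  have "v \<bullet> (V *v v) \<le> norm v * norm (V *v v)" by (rule norm_cauchy_schwarz)
  also have "\<dots> \<le> norm v * (opnorm V * norm v)"
    unfolding opnorm_def by (intro mult_left_mono onorm[OF bl]) auto
  finally show ?thesis by (simp add: power2_eq_square mult_ac)
qed

lemma opnorm_nonneg: "opnorm (V::real^'k^'k) \<ge> 0"
proof -
  have bl: "bounded_linear (\<lambda>x. (V::real^'k^'k) *v x)"
    using matrix_vector_mul_linear linear_linear by blast
  show ?thesis unfolding opnorm_def by (rule onorm_pos_le[OF bl])
qed

lemma symm_outer: "symm (outer u u)" by (simp add: symm_def mult.commute)
lemma symm_diff: "symm A \<Longrightarrow> symm B \<Longrightarrow> symm (A - B)" by (simp add: symm_def)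

lemma integrable_cont:
  fixes F :: "'a \<Rightarrow> 'b::topological_space" and h :: "'b \<Rightarrow> 'c::{banach,second_countable_topology}"
  assumes "finite_measure M" "continuous_on UNIV h" "F \<in> borel_measurable M"
    "AE x in M. F x \<in> K" "compact K"
  shows "integrable M (\<lambda>x. h (F x))"
proof -
  have "compact (h ` K)" using assms(2,5) by (intro compact_continuous_image) (auto intro: continuous_on_subset)
  then obtain B where B: "\<And>y. y \<in> h ` K \<Longrightarrow> norm y \<le> B"
    using compact_imp_bounded bounded_iff by metis
  show ?thesis
  proof (rule finite_measure.integrable_const_bound[OF assms(1), where B=B])
    show "AE x in M. norm (h (F x)) \<le> B" using assms(4) by eventually_elim (use B in auto)
    show "(\<lambda>x. h (F x)) \<in> borel_measurable M" by (rule borel_measurable_continuous_on[OF assms(2,3)])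
  qed
qed

lemma (in prob_space) sq_expectation_le:
  fixes X :: "'a \<Rightarrow> real"
  assumes "integrable M X" "integrable M (\<lambda>x. (X x)\<^sup>2)"
  shows "(expectation X)\<^sup>2 \<le> expectation (\<lambda>x. (X x)\<^sup>2)"
proof -
  have "0 \<le> variance X" by (intro integral_nonneg_AE) auto
  thus ?thesis using variance_eq[OF assms] by simp
qed

lemma int_outer:
  fixes a :: "real^'d \<Rightarrow> real^'k"
  assumes "prob_space \<nu>" "a \<in> borel_measurable \<nu>" "AE y in \<nu>. norm (a y) \<le> R"
  shows "integrable \<nu> (\<lambda>y. outer (a y) (a y))"
  by (rule integrable_cont[where h="\<lambda>v. outer v v" and K="cball 0 R", OF _ _ assms(2)])
     (use assms in \<open>auto intro!: continuous_intros simp: prob_space_def prob_space_axioms_def\<close>)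

lemma trace_sec_mom:
  fixes a :: "real^'d \<Rightarrow> real^'k"
  assumes "prob_space \<nu>" "a \<in> borel_measurable \<nu>" "AE y in \<nu>. norm (a y) \<le> R"
  shows "trace (sec_mom \<nu> a ** X) = (\<integral>y. a y \<bullet> (X *v a y) \<partial>\<nu>)"
  unfolding sec_mom_def
  using integral_bounded_linear[OF bl_trace_left int_outer[OF assms], of X]
  by (simp add: trace_outer_left)

lemma trace_sec_mom':
  fixes a :: "real^'d \<Rightarrow> real^'k"
  assumes "prob_space \<nu>" "a \<in> borel_measurable \<nu>" "AE y in \<nu>. norm (a y) \<le> R"
  shows "trace (X ** sec_mom \<nu> a) = (\<integral>y. a y \<bullet> (X *v a y) \<partial>\<nu>)"
  by (subst trace_mul_sym) (rule trace_sec_mom[OF assms])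

lemma qf_sec_mom:
  fixes a :: "real^'d \<Rightarrow> real^'k"
  assumes "prob_space \<nu>" "a \<in> borel_measurable \<nu>" "AE y in \<nu>. norm (a y) \<le> R"
  shows "v \<bullet> (sec_mom \<nu> a *v v) = (\<integral>y. (a y \<bullet> v)\<^sup>2 \<partial>\<nu>)"
  unfolding sec_mom_def
  using integral_bounded_linear[OF bl_qf int_outer[OF assms], of v]
  by (simp add: qf_outer)

lemma symm_sec_mom:
  fixes a :: "real^'d \<Rightarrow> real^'k"
  assumes "prob_space \<nu>" "a \<in> borel_measurable \<nu>" "AE y in \<nu>. norm (a y) \<le> R"
  shows "symm (sec_mom \<nu> a)"
  unfolding symm_def sec_mom_def
proof (intro allI)
  fix i j
  show "(\<integral>y. outer (a y) (a y) \<partial>\<nu>) $ i $ j = (\<integral>y. outer (a y) (a y) \<partial>\<nu>) $ j $ i"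
    using integral_bounded_linear[OF bl_nth int_outer[OF assms], of i j]
          integral_bounded_linear[OF bl_nth int_outer[OF assms], of j i]
    by (simp add: mult.commute)
qed

lemma abs_integral_le_const:
  fixes h :: "'a \<Rightarrow> real"
  assumes "prob_space M" "integrable M h" "AE x in M. \<bar>h x\<bar> \<le> c"
  shows "\<bar>integral\<^sup>L M h\<bar> \<le> c"
proof -
  interpret prob_space M by fact
  have "\<bar>integral\<^sup>L M h\<bar> \<le> (\<integral>x. \<bar>h x\<bar> \<partial>M)" by (rule integral_abs_bound)
  also have "\<dots> \<le> (\<integral>x. c \<partial>M)"
    by (rule integral_mono_AE) (use assms in auto)
  finally show ?thesis by (simp add: prob_space)
qed

lemma trace_mm_diff: "trace ((A::real^'k^'k) ** (B - C)) = trace (A ** B) - trace (A ** C)"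
  by (simp add: trace_mm sum_subtractf right_diff_distrib)

locale GLctx =
  fixes \<nu> \<mu> :: "(real^'d) measure" and a b :: "real^'d \<Rightarrow> real^'k" and R :: real
  assumes nu: "prob_space \<nu>" and mu: "prob_space \<mu>"
    and am[measurable]: "a \<in> borel_measurable \<nu>" and bm[measurable]: "b \<in> borel_measurable \<mu>"
    and ab: "AE y in \<nu>. norm (a y) \<le> R" and bb: "AE x in \<mu>. norm (b x) \<le> R" and R: "R > 0"
begin

definition "Bn = sec_mom \<nu> a"
definition "Mm = sec_mom \<mu> b"
definition "C x = outer (b x) (b x) - Mm"
definition "Y x = trace (Bn ** outer (b x) (b x)) - trace (Bn ** Mm)"

lemma fm_nu: "finite_measure \<nu>" using nu by (simp add: prob_space_def)
lemma fm_mu: "finite_measure \<mu>" using mu by (simp add: prob_space_def)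

lemma int_mu:
  fixes h :: "real^'k \<Rightarrow> 'c::{banach,second_countable_topology}"
  assumes "continuous_on UNIV h" shows "integrable \<mu> (\<lambda>x. h (b x))"
  by (rule integrable_cont[OF fm_mu assms bm, where K="cball 0 R"]) (use bb in auto)
lemma int_nu:
  fixes h :: "real^'k \<Rightarrow> 'c::{banach,second_countable_topology}"
  assumes "continuous_on UNIV h" shows "integrable \<nu> (\<lambda>y. h (a y))"
  by (rule integrable_cont[OF fm_nu assms am, where K="cball 0 R"]) (use ab in auto)

lemma Y_meas: "Y \<in> borel_measurable \<mu>"
  unfolding Y_def
  by (rule borel_measurable_continuous_on[OF _ bm, where f="\<lambda>v. trace (Bn ** outer v v) - trace (Bn ** Mm)"])
     (intro continuous_intros)

lemma symm_C: "symm (C x)"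
  unfolding C_def Mm_def by (intro symm_diff symm_outer symm_sec_mom[OF mu bm bb])

lemma Y_eq: "Y x = trace (Bn ** C x)"
  unfolding Y_def C_def by (simp add: trace_mm_diff)

lemma Y_eq2: "Y x = (\<integral>y. a y \<bullet> (C x *v a y) \<partial>\<nu>)"
  unfolding Y_eq Bn_def by (rule trace_sec_mom[OF nu am ab])

lemma Y_mean: "integral\<^sup>L \<mu> Y = 0"
proof -
  have i1: "integrable \<mu> (\<lambda>x. trace (Bn ** outer (b x) (b x)))"
    by (rule int_mu) (intro continuous_intros)
  have "integral\<^sup>L \<mu> (\<lambda>x. trace (Bn ** outer (b x) (b x))) = trace (Bn ** Mm)"
    unfolding Mm_def sec_mom_def
    by (rule integral_bounded_linear[OF bl_trace_right int_outer[OF mu bm bb]])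
  thus ?thesis unfolding Y_def
    using i1 prob_space.prob_space[OF mu] finite_measure.integrable_const[OF fm_mu]
    by (subst Bochner_Integration.integral_diff) auto
qed

lemma Y_bound: "AE x in \<mu>. \<bar>Y x\<bar> \<le> R\<^sup>2 * R\<^sup>2"
  using bb
proof eventually_elim
  case (elim x)
  have qv: "0 \<le> v \<bullet> (Mm *v v) \<and> v \<bullet> (Mm *v v) \<le> R\<^sup>2 * R\<^sup>2" if v: "norm v \<le> R" for v
  proof -
    have eq: "v \<bullet> (Mm *v v) = (\<integral>z. (b z \<bullet> v)\<^sup>2 \<partial>\<mu>)" unfolding Mm_def by (rule qf_sec_mom[OF mu bm bb])
    have int: "integrable \<mu> (\<lambda>z. (b z \<bullet> v)\<^sup>2)" by (rule int_mu) (intro continuous_intros)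
    have "(\<integral>z. (b z \<bullet> v)\<^sup>2 \<partial>\<mu>) \<le> (\<integral>z. R\<^sup>2 * R\<^sup>2 \<partial>\<mu>)"
    proof (rule integral_mono_AE[OF int])
      show "AE z in \<mu>. (b z \<bullet> v)\<^sup>2 \<le> R\<^sup>2 * R\<^sup>2" using bb
      proof eventually_elim
        case (elim z)
        have "\<bar>b z \<bullet> v\<bar> \<le> norm (b z) * norm v" by (rule Cauchy_Schwarz_ineq2)
        also have "\<dots> \<le> R * R" using elim v R by (intro mult_mono) auto
        finally have "\<bar>b z \<bullet> v\<bar> \<le> R * R" .
        hence "(b z \<bullet> v)\<^sup>2 \<le> (R * R)\<^sup>2" using power2_le_iff_abs_le[of "R*R"] R by simp
        thus ?case by (simp add: power2_eq_square)
      qed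
    qed (simp add: finite_measure.integrable_const[OF fm_mu])
    also have "\<dots> = R\<^sup>2 * R\<^sup>2" using prob_space.prob_space[OF mu] by simp
    finally show ?thesis using eq by (simp add: integral_nonneg_AE)
  qed
  have pt: "\<bar>v \<bullet> (C x *v v)\<bar> \<le> R\<^sup>2 * R\<^sup>2" if v: "norm v \<le> R" for v
  proof -
    have "v \<bullet> (C x *v v) = (b x \<bullet> v)\<^sup>2 - v \<bullet> (Mm *v v)"
      unfolding C_def by (simp add: qf_diff qf_outer)
    moreover have "(b x \<bullet> v)\<^sup>2 \<le> R\<^sup>2 * R\<^sup>2"
    proof -
      have "\<bar>b x \<bullet> v\<bar> \<le> norm (b x) * norm v" by (rule Cauchy_Schwarz_ineq2)
      also have "\<dots> \<le> R * R" using elim v R by (intro mult_mono) auto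
      finally have "\<bar>b x \<bullet> v\<bar> \<le> R * R" .
      hence "(b x \<bullet> v)\<^sup>2 \<le> (R * R)\<^sup>2" using power2_le_iff_abs_le[of "R*R"] R by simp
      thus ?thesis by (simp add: power2_eq_square)
    qed
    ultimately show ?thesis using qv[OF v] zero_le_power2[of "b x \<bullet> v"] unfolding abs_le_iff by linarith
  qed
  show ?case unfolding Y_eq2
  proof (rule abs_integral_le_const[OF nu])
    show "integrable \<nu> (\<lambda>y. a y \<bullet> (C x *v a y))" by (rule int_nu) (intro continuous_intros)
    show "AE y in \<nu>. \<bar>a y \<bullet> (C x *v a y)\<bar> \<le> R\<^sup>2 * R\<^sup>2" using ab by eventually_elim (rule pt)
  qed
qed

lemma Y_sq_pt: "(Y x)\<^sup>2 \<le> R\<^sup>2 * trace (Bn ** (C x ** C x))"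
proof -
  have i1: "integrable \<nu> (\<lambda>y. a y \<bullet> (C x *v a y))" by (rule int_nu) (intro continuous_intros)
  have i2: "integrable \<nu> (\<lambda>y. (a y \<bullet> (C x *v a y))\<^sup>2)" by (rule int_nu) (intro continuous_intros)
  have i3: "integrable \<nu> (\<lambda>y. R\<^sup>2 * (a y \<bullet> ((C x ** C x) *v a y)))" by (rule int_nu) (intro continuous_intros)
  have "(Y x)\<^sup>2 \<le> (\<integral>y. (a y \<bullet> (C x *v a y))\<^sup>2 \<partial>\<nu>)"
    unfolding Y_eq2 by (rule prob_space.sq_expectation_le[OF nu i1 i2])
  also have "\<dots> \<le> (\<integral>y. R\<^sup>2 * (a y \<bullet> ((C x ** C x) *v a y)) \<partial>\<nu>)"
  proof (rule integral_mono_AE[OF i2 i3])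
    show "AE y in \<nu>. (a y \<bullet> (C x *v a y))\<^sup>2 \<le> R\<^sup>2 * (a y \<bullet> ((C x ** C x) *v a y))"
      using ab
    proof eventually_elim
      case (elim y)
      have "(a y \<bullet> (C x *v a y))\<^sup>2 \<le> (norm (a y))\<^sup>2 * (a y \<bullet> ((C x ** C x) *v a y))"
        by (rule qf_bound_sq[OF symm_C])
      also have "\<dots> \<le> R\<^sup>2 * (a y \<bullet> ((C x ** C x) *v a y))"
        using elim by (intro mult_right_mono qf_sq_nonneg[OF symm_C] power_mono) auto
      finally show ?case .
    qed
  qed
  also have "\<dots> = R\<^sup>2 * trace (Bn ** (C x ** C x))"
    unfolding Bn_def trace_sec_mom[OF nu am ab] by simp
  finally show ?thesis .
qed

lemma Y_var: "(\<integral>x. (Y x)\<^sup>2 \<partial>\<mu>) \<le> R\<^sup>2 * R\<^sup>2 * opnorm (var_mat \<mu> b)"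
proof -
  define V where "V = var_mat \<mu> b"
  have iY: "integrable \<mu> (\<lambda>x. (Y x)\<^sup>2)" unfolding Y_def by (rule int_mu) (intro continuous_intros)
  have iCC: "integrable \<mu> (\<lambda>x. C x ** C x)" unfolding C_def by (rule int_mu) (intro continuous_intros)
  have iT: "integrable \<mu> (\<lambda>x. R\<^sup>2 * trace (Bn ** (C x ** C x)))"
    unfolding C_def by (rule int_mu) (intro continuous_intros)
  have "(\<integral>x. (Y x)\<^sup>2 \<partial>\<mu>) \<le> (\<integral>x. R\<^sup>2 * trace (Bn ** (C x ** C x)) \<partial>\<mu>)"
    by (rule integral_mono[OF iY iT Y_sq_pt])
  also have "\<dots> = R\<^sup>2 * trace (Bn ** V)"
  proof -
    have "(\<integral>x. trace (Bn ** (C x ** C x)) \<partial>\<mu>) = trace (Bn ** V)"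
      unfolding V_def var_mat_def C_def[abs_def] Mm_def
      by (rule integral_bounded_linear[OF bl_trace_right iCC[unfolded C_def Mm_def]])
    thus ?thesis by simp
  qed
  also have "trace (Bn ** V) = (\<integral>y. a y \<bullet> (V *v a y) \<partial>\<nu>)"
    unfolding Bn_def by (rule trace_sec_mom[OF nu am ab])
  also have "\<dots> \<le> (\<integral>y. opnorm V * R\<^sup>2 \<partial>\<nu>)"
  proof (rule integral_mono_AE)
    show "integrable \<nu> (\<lambda>y. a y \<bullet> (V *v a y))" by (rule int_nu) (intro continuous_intros)
    show "AE y in \<nu>. a y \<bullet> (V *v a y) \<le> opnorm V * R\<^sup>2" using ab
    proof eventually_elim
      case (elim y)
      have "a y \<bullet> (V *v a y) \<le> opnorm V * (norm (a y))\<^sup>2" by (rule qf_opnorm)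
      also have "\<dots> \<le> opnorm V * R\<^sup>2" using elim
        by (intro mult_left_mono opnorm_nonneg power_mono) auto
      finally show ?case .
    qed
  qed (simp add: finite_measure.integrable_const[OF fm_nu])
  also have "\<dots> = opnorm V * R\<^sup>2" using prob_space.prob_space[OF nu] by simp
  finally have "(\<integral>x. (Y x)\<^sup>2 \<partial>\<mu>) \<le> R\<^sup>2 * (opnorm V * R\<^sup>2)"
    using R by (simp add: mult_left_mono)
  thus ?thesis by (simp add: V_def mult_ac)
qed

end

lemma mv_nth_inner: "((C::real^'k^'k) *v v) $ i = C $ i \<bullet> v"
  by (simp add: matrix_vector_mult_def inner_vec_def)

lemma nsq_vec: "(norm (w::'a::real_normed_vector^'k))\<^sup>2 = (\<Sum>i\<in>UNIV. (norm (w $ i))\<^sup>2)"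
  by (simp add: norm_vec_def L2_set_def sum_nonneg)

lemma sc_mv: "((r::real) *\<^sub>R (B::real^'k^'k)) *v x = r *\<^sub>R (B *v x)"
  by (simp add: vec_eq_iff matrix_vector_mult_def sum_distrib_left mult.assoc)

lemma norm_mv_le: "norm ((C::real^'k^'k) *v v) \<le> norm C * norm v"
proof -
  have "(norm (C *v v))\<^sup>2 = (\<Sum>i\<in>UNIV. (C $ i \<bullet> v)\<^sup>2)"
    by (simp add: nsq_vec[of "C *v v"] mv_nth_inner)
  also have "\<dots> \<le> (\<Sum>i\<in>UNIV. (norm (C $ i))\<^sup>2 * (norm v)\<^sup>2)"
  proof (intro sum_mono)
    fix i
    have "\<bar>C $ i \<bullet> v\<bar> \<le> norm (C $ i) * norm v" by (rule Cauchy_Schwarz_ineq2)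
    hence "(C $ i \<bullet> v)\<^sup>2 \<le> (norm (C $ i) * norm v)\<^sup>2"
      using power2_le_iff_abs_le[of "norm (C $ i) * norm v" "C $ i \<bullet> v"] by simp
    thus "(C $ i \<bullet> v)\<^sup>2 \<le> (norm (C $ i))\<^sup>2 * (norm v)\<^sup>2" by (simp add: power_mult_distrib)
  qed
  also have "\<dots> = (norm C * norm v)\<^sup>2"
    by (simp add: power_mult_distrib sum_distrib_right[symmetric] nsq_vec[of C])
  finally show ?thesis
    using power2_le_imp_le by (metis mult_nonneg_nonneg norm_ge_zero)
qed

lemma trace_sq_symm: "symm C \<Longrightarrow> trace ((C::real^'k^'k) ** C) = (norm C)\<^sup>2"
  unfolding trace_mm symm_def
  by (simp add: power2_norm_eq_inner inner_vec_def)

lemma bl_bil: "bounded_linear (\<lambda>Y::real^'k^'k. y \<bullet> (Y *v x))"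
  unfolding linear_linear
  by (rule linearI) (simp_all add: matrix_vector_mult_add_rdistrib inner_add_right sc_mv)

lemma bl_trace: "bounded_linear (\<lambda>Y::real^'k^'k. trace Y)"
  unfolding linear_linear
  by (rule linearI) (simp_all add: trace_def sum.distrib sum_distrib_left)

lemma bil_symm: "symm C \<Longrightarrow> y \<bullet> (((C::real^'k^'k) ** C) *v x) = (C *v y) \<bullet> (C *v x)"
proof -
  assume s: "symm C"
  have "y \<bullet> ((C ** C) *v x) = y \<bullet> (C *v (C *v x))" by (simp add: matrix_vector_mul_assoc)
  also have "\<dots> = (y v* C) \<bullet> (C *v x)" by (simp add: dot_lmul_matrix)
  also have "y v* C = C *v y" using symm_transpose[OF s] by (metis transpose_matrix_vector)
  finally show ?thesis .
qed

context GLctx begin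

lemma opnorm_le_trace: "opnorm (var_mat \<mu> b) \<le> trace (var_mat \<mu> b)"
proof -
  define V where "V = var_mat \<mu> b"
  have V_eq: "V = (\<integral>x. C x ** C x \<partial>\<mu>)" unfolding V_def var_mat_def C_def Mm_def ..
  have iCC: "integrable \<mu> (\<lambda>x. C x ** C x)" unfolding C_def by (rule int_mu) (intro continuous_intros)
  have trV: "trace V = (\<integral>x. (norm (C x))\<^sup>2 \<partial>\<mu>)"
    unfolding V_eq integral_bounded_linear[OF bl_trace iCC, symmetric]
    by (simp add: trace_sq_symm[OF symm_C])
  have key: "norm (V *v x) \<le> trace V * norm x" for x
  proof -
    define y where "y = V *v x"
    have "(norm y)\<^sup>2 = y \<bullet> (V *v x)" by (simp add: y_def power2_norm_eq_inner)
    also have "\<dots> = (\<integral>z. y \<bullet> ((C z ** C z) *v x) \<partial>\<mu>)"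
      unfolding V_eq by (rule integral_bounded_linear[OF bl_bil iCC, symmetric])
    also have "\<dots> \<le> (\<integral>z. (norm (C z))\<^sup>2 * (norm y * norm x) \<partial>\<mu>)"
    proof (rule integral_mono)
      show "integrable \<mu> (\<lambda>z. y \<bullet> ((C z ** C z) *v x))"
        unfolding C_def by (rule int_mu) (intro continuous_intros)
      show "integrable \<mu> (\<lambda>z. (norm (C z))\<^sup>2 * (norm y * norm x))"
        unfolding C_def by (rule int_mu) (intro continuous_intros)
      fix z
      have "y \<bullet> ((C z ** C z) *v x) = (C z *v y) \<bullet> (C z *v x)" by (rule bil_symm[OF symm_C])
      also have "\<dots> \<le> norm (C z *v y) * norm (C z *v x)" by (rule norm_cauchy_schwarz)
      also have "\<dots> \<le> (norm (C z) * norm y) * (norm (C z) * norm x)"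
        by (intro mult_mono norm_mv_le) auto
      finally show "y \<bullet> ((C z ** C z) *v x) \<le> (norm (C z))\<^sup>2 * (norm y * norm x)"
        by (simp add: power2_eq_square mult_ac)
    qed
    also have "\<dots> = trace V * (norm y * norm x)" unfolding trV by simp
    finally have *: "(norm y)\<^sup>2 \<le> trace V * norm x * norm y" by (simp add: mult_ac)
    show ?thesis
    proof (cases "norm y = 0")
      case True
      have "trace V \<ge> 0" unfolding trV by (intro integral_nonneg_AE) auto
      thus ?thesis using True by (simp add: y_def)
    next
      case False
      hence "norm y > 0" by simp
      thus ?thesis using * by (simp add: y_def power2_eq_square)
    qed
  qed
  show ?thesis unfolding V_def[symmetric] opnorm_def by (rule onorm_le[OF key])
qed

lemma opnorm_pos: "var_mat \<mu> b \<noteq> 0 \<Longrightarrow> opnorm (var_mat \<mu> b) > 0"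
proof -
  assume nz: "var_mat \<mu> b \<noteq> 0"
  have bl: "bounded_linear (\<lambda>x. var_mat \<mu> b *v x)"
    using matrix_vector_mul_linear linear_linear by blast
  have "opnorm (var_mat \<mu> b) \<noteq> 0"
  proof
    assume "opnorm (var_mat \<mu> b) = 0"
    hence "\<forall>x. var_mat \<mu> b *v x = 0" unfolding opnorm_def onorm_eq_0[OF bl] .
    hence "var_mat \<mu> b = 0" by (subst matrix_eq) simp
    thus False using nz by simp
  qed
  thus ?thesis using opnorm_nonneg[of "var_mat \<mu> b"] by simp
qed

lemma intdim_ge1: "var_mat \<mu> b \<noteq> 0 \<Longrightarrow> intdim (var_mat \<mu> b) \<ge> 1"
  using opnorm_pos opnorm_le_trace unfolding intdim_def by simp

end

lemma meas_outer[measurable (raw)]: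
  fixes F G :: "'a \<Rightarrow> real^'k"
  assumes "F \<in> borel_measurable M" "G \<in> borel_measurable M"
  shows "(\<lambda>x. outer (F x) (G x)) \<in> borel_measurable M"
  using borel_measurable_continuous_on[where f="\<lambda>p. outer (fst p) (snd p)" and g="\<lambda>x. (F x, G x)", OF _ borel_measurable_Pair[OF assms]]
  by (simp add: continuous_intros)

lemma meas_mm[measurable (raw)]:
  fixes F G :: "'a \<Rightarrow> real^'k^'k"
  assumes "F \<in> borel_measurable M" "G \<in> borel_measurable M"
  shows "(\<lambda>x. F x ** G x) \<in> borel_measurable M"
  using borel_measurable_continuous_on[where f="\<lambda>p. fst p ** snd p" and g="\<lambda>x. (F x, G x)", OF _ borel_measurable_Pair[OF assms]]
  by (simp add: continuous_intros)

lemma meas_trace[measurable (raw)]: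
  fixes F :: "'a \<Rightarrow> real^'k^'k"
  assumes "F \<in> borel_measurable M"
  shows "(\<lambda>x. trace (F x)) \<in> borel_measurable M"
  using borel_measurable_continuous_on[where f="trace", OF _ assms]
  by (simp add: continuous_intros cont_trace[of UNIV "\<lambda>x. x", simplified])

lemma markov_AE_fst:
  fixes f :: "real^'d \<Rightarrow> real^'k"
  assumes X_meas: "X \<in> sets lborel"
    and rho0_prob: "prob_space \<rho>0" and rho0_sets: "sets \<rho>0 = sets borel"
    and p_meas: "(\<lambda>(x, x'). p x x') \<in> borel_measurable (borel \<Otimes>\<^sub>M borel)"
    and f_meas: "f \<in> borel_measurable borel"
    and f_bdd: "AE x in \<rho>0. norm (f x) \<le> R"
  shows "AE z in markov_joint \<rho>0 p X. norm (f (fst z)) \<le> R"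
proof -
  interpret r: prob_space \<rho>0 by fact
  interpret P: pair_sigma_finite \<rho>0 lborel
    by (intro pair_sigma_finite.intro r.sigma_finite_measure_axioms lborel.sigma_finite_measure_axioms)
  have sp: "sets (\<rho>0 \<Otimes>\<^sub>M lborel) = sets (borel \<Otimes>\<^sub>M borel)"
    by (intro sets_pair_measure_cong rho0_sets) simp
  have dm: "(\<lambda>(x, x'). ennreal (indicator X x' * p x x')) \<in> borel_measurable (\<rho>0 \<Otimes>\<^sub>M lborel)"
  proof -
    have "(\<lambda>(x, x'). ennreal (indicator X x' * p x x')) \<in> borel_measurable (borel \<Otimes>\<^sub>M borel)"
      using p_meas X_meas by measurable
    thus ?thesis by (subst measurable_cong_sets[OF sp refl])
  qed
  have fm: "f \<in> borel_measurable \<rho>0" using f_meas by (subst measurable_cong_sets[OF rho0_sets refl])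
  have "AE z in \<rho>0 \<Otimes>\<^sub>M lborel. norm (f (fst z)) \<le> R"
  proof (rule P.AE_pair_measure)
    show "{x \<in> space (\<rho>0 \<Otimes>\<^sub>M lborel). norm (f (fst x)) \<le> R} \<in> sets (\<rho>0 \<Otimes>\<^sub>M lborel)"
      using fm by measurable
    show "AE x in \<rho>0. AE y in lborel. norm (f (fst (x, y))) \<le> R"
      using f_bdd by eventually_elim simp
  qed
  thus ?thesis unfolding markov_joint_def
    by (subst AE_density[OF dm]) (auto elim: eventually_mono)
qed

lemma trace_outer: "trace (outer u v) = (u::real^'k) \<bullet> v"
  by (simp add: trace_def inner_vec_def)

lemma trace_scaleR: "trace ((c::real) *\<^sub>R (A::real^'k^'k)) = c * trace A"
  by (simp add: trace_def sum_distrib_left)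

lemma trace_sum: "trace (\<Sum>t\<in>S. (A t::real^'k^'k)) = (\<Sum>t\<in>S. trace (A t))"
  by (simp add: trace_def sum_component) (rule sum.swap)

lemma trace_emp_cross:
  "trace (emp_cross f g zs N) = (1 / real N) * (\<Sum>t<N. f (fst (zs t)) \<bullet> g (snd (zs t)))"
  by (simp add: emp_cross_def trace_scaleR trace_sum trace_outer)

lemma trace_emp_mom:
  "trace ((X::real^'k^'k) ** emp_mom f xs n) = (1 / real n) * (\<Sum>i<n. trace (X ** outer (f (xs i)) (f (xs i))))"
proof -
  interpret T: bounded_linear "\<lambda>Y::real^'k^'k. trace (X ** Y)" by (rule bl_trace_right)
  show ?thesis unfolding emp_mom_def T.scaleR T.sum by simp
qed

lemma emp_mom_pmf:
  assumes "n > 0"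
  shows "emp_mom g w n = sec_mom (measure_pmf (map_pmf w (pmf_of_set {..<n}))) g"
proof -
  have "sec_mom (measure_pmf (map_pmf w (pmf_of_set {..<n}))) g
        = (\<integral>i. outer (g (w i)) (g (w i)) \<partial>measure_pmf (pmf_of_set {..<n}))"
    unfolding sec_mom_def by simp
  also have "\<dots> = (\<Sum>i<n. pmf (pmf_of_set {..<n}) i *\<^sub>R outer (g (w i)) (g (w i)))"
  proof (rule integral_measure_pmf[of "{..<n}"])
    have "set_pmf (pmf_of_set {..<n}) = {..<n}" using assms by (intro set_pmf_of_set) auto
    thus "\<And>i. i \<in> set_pmf (pmf_of_set {..<n}) \<Longrightarrow> outer (g (w i)) (g (w i)) \<noteq> 0 \<Longrightarrow> i \<in> {..<n}" by simp
  qed simp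
  also have "\<dots> = (\<Sum>i<n. (1 / real n) *\<^sub>R outer (g (w i)) (g (w i)))"
  proof (intro sum.cong refl)
    fix i assume "i \<in> {..<n}"
    thus "pmf (pmf_of_set {..<n}) i *\<^sub>R outer (g (w i)) (g (w i)) = (1 / real n) *\<^sub>R outer (g (w i)) (g (w i))"
      using assms by (subst pmf_of_set) auto
  qed
  also have "\<dots> = emp_mom g w n" unfolding emp_mom_def by (simp add: scaleR_sum_right)
  finally show ?thesis ..
qed

lemma sample_bernstein:
  fixes \<nu> \<mu> :: "(real^'d) measure" and a b :: "real^'d \<Rightarrow> real^'k" and V :: "nat \<Rightarrow> 'w \<Rightarrow> real^'d"
  assumes M: "prob_space M" and GL: "GLctx \<nu> \<mu> a b R" and mus: "sets \<mu> = sets borel"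
    and Vnz: "var_mat \<mu> b \<noteq> 0" and n: "n > 0"
    and indep: "prob_space.indep_vars M (\<lambda>_. borel) V {..<n}"
    and dist: "\<And>i. i < n \<Longrightarrow> distr M borel (V i) = \<mu>" and ell: "ell > 0"
  shows "measure M {\<omega>\<in>space M. \<bar>\<Sum>i<n. (trace (sec_mom \<nu> a ** outer (b (V i \<omega>)) (b (V i \<omega>)))
              - trace (sec_mom \<nu> a ** sec_mom \<mu> b))\<bar>
           \<le> real n * (sqrt (2 * (R\<^sup>2 * R\<^sup>2 * opnorm (var_mat \<mu> b)) * ell / real n)
                  + 2 * (R\<^sup>2 * R\<^sup>2) * ell / (3 * real n))} \<ge> 1 - 2 * exp (-ell)"
proof -
  interpret M: prob_space M by fact
  interpret GLctx \<nu> \<mu> a b R by fact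
  have Ym: "Y \<in> borel_measurable borel" using Y_meas by (subst measurable_cong_sets[OF mus[symmetric] refl])
  have Vm[measurable]: "V i \<in> borel_measurable M" if "i < n" for i
    using indep that unfolding M.indep_vars_def by auto
  have Ydef: "Y x = trace (sec_mom \<nu> a ** outer (b x) (b x)) - trace (sec_mom \<nu> a ** sec_mom \<mu> b)" for x
    by (simp add: Y_def Bn_def Mm_def)
  have "M.prob {\<omega>\<in>space M. \<bar>\<Sum>i\<in>{..<n}. Y (V i \<omega>)\<bar> \<le> real (card {..<n}) *
            (sqrt (2 * (R\<^sup>2 * R\<^sup>2 * opnorm (var_mat \<mu> b)) * ell / real (card {..<n}))
             + 2 * (R\<^sup>2 * R\<^sup>2) * ell / (3 * real (card {..<n})))} \<ge> 1 - 2 * exp (-ell)"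
  proof (rule M.bernstein_conf)
    show "M.indep_vars (\<lambda>_. borel) (\<lambda>i \<omega>. Y (V i \<omega>)) {..<n}"
      by (rule M.indep_vars_compose2[OF indep]) (use Ym in auto)
    show "AE \<omega> in M. \<bar>Y (V i \<omega>)\<bar> \<le> R\<^sup>2 * R\<^sup>2" if "i \<in> {..<n}" for i
    proof -
      have di: "distr M borel (V i) = \<mu>" using dist that by simp
      have "AE x in distr M borel (V i). \<bar>Y x\<bar> \<le> R\<^sup>2 * R\<^sup>2" unfolding di by (rule Y_bound)
      thus ?thesis using that Ym by (subst (asm) AE_distr_iff) auto
    qed
    show "M.expectation (\<lambda>\<omega>. Y (V i \<omega>)) = 0" if "i \<in> {..<n}" for i
    proof -
      have "M.expectation (\<lambda>\<omega>. Y (V i \<omega>)) = integral\<^sup>L (distr M borel (V i)) Y"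
        using that Ym by (subst integral_distr) auto
      thus ?thesis using dist that Y_mean by simp
    qed
    show "M.expectation (\<lambda>\<omega>. (Y (V i \<omega>))\<^sup>2) \<le> R\<^sup>2 * R\<^sup>2 * opnorm (var_mat \<mu> b)" if "i \<in> {..<n}" for i
    proof -
      have "M.expectation (\<lambda>\<omega>. (Y (V i \<omega>))\<^sup>2) = (\<integral>x. (Y x)\<^sup>2 \<partial>distr M borel (V i))"
        using that Ym by (subst integral_distr) auto
      thus ?thesis using dist that Y_var by simp
    qed
    show "R\<^sup>2 * R\<^sup>2 > 0" using R by simp
    show "R\<^sup>2 * R\<^sup>2 * opnorm (var_mat \<mu> b) > 0" using R opnorm_pos[OF Vnz] by simp
  qed (use n ell in auto)
  thus ?thesis by (simp add: Ydef)
qed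

lemma scalar_bernstein:
  fixes J :: "((real^'d) \<times> (real^'d)) measure" and f g :: "real^'d \<Rightarrow> real^'k"
    and Z :: "nat \<Rightarrow> 'w \<Rightarrow> (real^'d) \<times> (real^'d)"
  assumes M: "prob_space M" and J: "prob_space J" and Js: "sets J = sets (borel \<Otimes>\<^sub>M borel)"
    and fm: "f \<in> borel_measurable borel" and gm: "g \<in> borel_measurable borel"
    and fb: "AE z in J. norm (f (fst z)) \<le> R" and gb: "AE z in J. norm (g (snd z)) \<le> R"
    and R: "R > 0" and n: "n > 0"
    and indep: "prob_space.indep_vars M (\<lambda>_. borel \<Otimes>\<^sub>M borel) Z {..<n}"
    and dist: "\<And>t. t < n \<Longrightarrow> distr M (borel \<Otimes>\<^sub>M borel) (Z t) = J" and ell: "ell > 0"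
  shows "measure M {\<omega>\<in>space M. \<bar>\<Sum>t<n. (f (fst (Z t \<omega>)) \<bullet> g (snd (Z t \<omega>)) - trace (cross_mom J f g))\<bar>
           \<le> real n * (sqrt (2 * (R\<^sup>2 * R\<^sup>2) * ell / real n) + 2 * (2 * R\<^sup>2) * ell / (3 * real n))}
         \<ge> 1 - 2 * exp (-ell)"
proof -
  interpret M: prob_space M by fact
  interpret J: prob_space J by fact
  define h where "h z = f (fst z) \<bullet> g (snd z)" for z
  have hm0: "h \<in> borel_measurable (borel \<Otimes>\<^sub>M borel)" unfolding h_def using fm gm by measurable
  have hm: "h \<in> borel_measurable J" using hm0 by (subst measurable_cong_sets[OF Js refl])
  have Fm: "(\<lambda>z. (f (fst z), g (snd z))) \<in> borel_measurable J"
  proof -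
    have "(\<lambda>z. (f (fst z), g (snd z))) \<in> borel_measurable (borel \<Otimes>\<^sub>M borel)" using fm gm by measurable
    thus ?thesis by (subst measurable_cong_sets[OF Js refl])
  qed
  have AEK: "AE z in J. (f (fst z), g (snd z)) \<in> cball 0 R \<times> cball 0 R"
    using fb gb by eventually_elim auto
  have intF: "integrable J (\<lambda>z. outer (f (fst z)) (g (snd z)))"
    using integrable_cont[OF J.finite_measure_axioms _ Fm AEK, where h="\<lambda>p. outer (fst p) (snd p)"]
    by (simp add: continuous_intros compact_Times)
  have inth: "integrable J h"
    using integrable_cont[OF J.finite_measure_axioms _ Fm AEK, where h="\<lambda>p. fst p \<bullet> snd p"]
    by (simp add: continuous_intros compact_Times h_def[abs_def])
  have inth2: "integrable J (\<lambda>z. (h z)\<^sup>2)"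
    using integrable_cont[OF J.finite_measure_axioms _ Fm AEK, where h="\<lambda>p. (fst p \<bullet> snd p)\<^sup>2"]
    by (simp add: continuous_intros compact_Times h_def)
  define c where "c = trace (cross_mom J f g)"
  have c: "c = integral\<^sup>L J h"
    unfolding c_def cross_mom_def h_def
    using integral_bounded_linear[OF bl_trace intF] by (simp add: trace_outer)
  have hb: "AE z in J. \<bar>h z\<bar> \<le> R\<^sup>2"
    using fb gb
  proof eventually_elim
    case (elim z)
    have "\<bar>h z\<bar> \<le> norm (f (fst z)) * norm (g (snd z))" unfolding h_def by (rule Cauchy_Schwarz_ineq2)
    also have "\<dots> \<le> R * R" using elim R by (intro mult_mono) auto
    finally show ?case by (simp add: power2_eq_square)
  qed
  have cb: "\<bar>c\<bar> \<le> R\<^sup>2" unfolding c by (rule abs_integral_le_const[OF J inth hb])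
  define Y where "Y z = h z - c" for z
  have Ym: "Y \<in> borel_measurable (borel \<Otimes>\<^sub>M borel)" unfolding Y_def using hm0 by measurable
  have Zm[measurable]: "Z t \<in> measurable M (borel \<Otimes>\<^sub>M borel)" if "t < n" for t
    using indep that unfolding M.indep_vars_def by auto
  have "M.prob {\<omega>\<in>space M. \<bar>\<Sum>t\<in>{..<n}. Y (Z t \<omega>)\<bar> \<le> real (card {..<n}) *
            (sqrt (2 * (R\<^sup>2 * R\<^sup>2) * ell / real (card {..<n}))
             + 2 * (2 * R\<^sup>2) * ell / (3 * real (card {..<n})))} \<ge> 1 - 2 * exp (-ell)"
  proof (rule M.bernstein_conf)
    show "M.indep_vars (\<lambda>_. borel) (\<lambda>t \<omega>. Y (Z t \<omega>)) {..<n}"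
      by (rule M.indep_vars_compose2[OF indep]) (use Ym in auto)
    show "AE \<omega> in M. \<bar>Y (Z t \<omega>)\<bar> \<le> 2 * R\<^sup>2" if "t \<in> {..<n}" for t
    proof -
      have di: "distr M (borel \<Otimes>\<^sub>M borel) (Z t) = J" using dist that by simp
      have "AE z in J. \<bar>Y z\<bar> \<le> 2 * R\<^sup>2" using hb by eventually_elim (use cb in \<open>auto simp: Y_def\<close>)
      hence "AE z in distr M (borel \<Otimes>\<^sub>M borel) (Z t). \<bar>Y z\<bar> \<le> 2 * R\<^sup>2" unfolding di .
      thus ?thesis using that Ym by (subst (asm) AE_distr_iff) auto
    qed
    show "M.expectation (\<lambda>\<omega>. Y (Z t \<omega>)) = 0" if "t \<in> {..<n}" for t
    proof -
      have di: "distr M (borel \<Otimes>\<^sub>M borel) (Z t) = J" using dist that by simp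
      have "M.expectation (\<lambda>\<omega>. Y (Z t \<omega>)) = integral\<^sup>L (distr M (borel \<Otimes>\<^sub>M borel) (Z t)) Y"
        using that Ym by (subst integral_distr) auto
      also have "\<dots> = integral\<^sup>L J Y" unfolding di ..
      also have "\<dots> = 0" unfolding Y_def using inth c by (simp add: J.prob_space)
      finally show ?thesis .
    qed
    show "M.expectation (\<lambda>\<omega>. (Y (Z t \<omega>))\<^sup>2) \<le> R\<^sup>2 * R\<^sup>2" if "t \<in> {..<n}" for t
    proof -
      have di: "distr M (borel \<Otimes>\<^sub>M borel) (Z t) = J" using dist that by simp
      have Y2m: "(\<lambda>z. (Y z)\<^sup>2) \<in> borel_measurable (borel \<Otimes>\<^sub>M borel)" using Ym by measurable
      have "M.expectation (\<lambda>\<omega>. (Y (Z t \<omega>))\<^sup>2) = (\<integral>z. (Y z)\<^sup>2 \<partial>distr M (borel \<Otimes>\<^sub>M borel) (Z t))"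
        using that Y2m by (subst integral_distr) auto
      also have "\<dots> = J.variance h" unfolding di Y_def c ..
      also have "\<dots> = J.expectation (\<lambda>z. (h z)\<^sup>2) - (J.expectation h)\<^sup>2"
        by (rule J.variance_eq[OF inth inth2])
      also have "\<dots> \<le> J.expectation (\<lambda>z. (h z)\<^sup>2)" by simp
      also have "\<dots> \<le> J.expectation (\<lambda>z. R\<^sup>2 * R\<^sup>2)"
      proof (rule integral_mono_AE[OF inth2])
        show "AE z in J. (h z)\<^sup>2 \<le> R\<^sup>2 * R\<^sup>2" using hb
        proof eventually_elim
          case (elim z)
          hence "(h z)\<^sup>2 \<le> (R\<^sup>2)\<^sup>2" using power2_le_iff_abs_le[of "R\<^sup>2" "h z"] by simp
          thus ?case by (simp add: power2_eq_square)
        qed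
      qed simp
      also have "\<dots> = R\<^sup>2 * R\<^sup>2" by (simp add: J.prob_space)
      finally show ?thesis .
    qed
  qed (use n ell R in auto)
  thus ?thesis by (simp add: Y_def h_def c_def)
qed

lemma (in prob_space) indep_section_bound:
  assumes ind: "indep_var S X T Y" and A: "A \<in> sets (S \<Otimes>\<^sub>M T)"
    and sec: "\<And>y. y \<in> space T \<Longrightarrow> prob {\<omega>\<in>space M. (X \<omega>, y) \<in> A} \<ge> 1 - d"
  shows "prob {\<omega>\<in>space M. (X \<omega>, Y \<omega>) \<in> A} \<ge> 1 - d"
proof (cases "1 - d \<le> 0")
  case True thus ?thesis by (meson measure_nonneg order_trans)
next
  case False
  have Xm[measurable]: "X \<in> measurable M S" and Ym[measurable]: "Y \<in> measurable M T"
    using ind by (auto dest: indep_var_rv1 indep_var_rv2)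
  define DX where "DX = distr M S X"
  define DY where "DY = distr M T Y"
  interpret DX: prob_space DX unfolding DX_def by (rule prob_space_distr) simp
  interpret DY: prob_space DY unfolding DY_def by (rule prob_space_distr) simp
  interpret P: pair_sigma_finite DX DY
    by (intro pair_sigma_finite.intro DX.sigma_finite_measure_axioms DY.sigma_finite_measure_axioms)
  have eq: "DX \<Otimes>\<^sub>M DY = distr M (S \<Otimes>\<^sub>M T) (\<lambda>x. (X x, Y x))"
    using ind unfolding indep_var_distribution_eq DX_def DY_def by simp
  have sXY: "sets (DX \<Otimes>\<^sub>M DY) = sets (S \<Otimes>\<^sub>M T)" unfolding eq by simp
  have A': "A \<in> sets (DX \<Otimes>\<^sub>M DY)" using A sXY by simp
  have "emeasure M {\<omega>\<in>space M. (X \<omega>, Y \<omega>) \<in> A} = emeasure (distr M (S \<Otimes>\<^sub>M T) (\<lambda>x. (X x, Y x))) A"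
    using A by (subst emeasure_distr) (auto intro!: arg_cong[where f="emeasure M"])
  also have "\<dots> = emeasure (DX \<Otimes>\<^sub>M DY) A" unfolding eq ..
  also have "\<dots> = (\<integral>\<^sup>+y. emeasure DX ((\<lambda>x. (x, y)) -` A) \<partial>DY)"
    by (rule P.emeasure_pair_measure_alt2[OF A'])
  also have "\<dots> \<ge> (\<integral>\<^sup>+y. ennreal (1 - d) \<partial>DY)"
  proof (rule nn_integral_mono)
    fix y assume "y \<in> space DY"
    hence y: "y \<in> space T" by (simp add: DY_def)
    have secA: "(\<lambda>x. (x, y)) -` A \<in> sets S" by (rule sets_Pair2[OF A])
    have "emeasure DX ((\<lambda>x. (x, y)) -` A) = emeasure M (X -` ((\<lambda>x. (x, y)) -` A) \<inter> space M)"
      unfolding DX_def using secA by (subst emeasure_distr) auto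
    also have "X -` ((\<lambda>x. (x, y)) -` A) \<inter> space M = {\<omega>\<in>space M. (X \<omega>, y) \<in> A}" by auto
    also have "emeasure M \<dots> = ennreal (prob {\<omega>\<in>space M. (X \<omega>, y) \<in> A})"
      by (rule emeasure_eq_measure)
    also have "\<dots> \<ge> ennreal (1 - d)" using sec[OF y] by (rule ennreal_leI)
    finally show "ennreal (1 - d) \<le> emeasure DX ((\<lambda>x. (x, y)) -` A)" .
  qed
  also have "(\<integral>\<^sup>+y. ennreal (1 - d) \<partial>DY) = ennreal (1 - d)"
    by (simp add: DY.emeasure_space_1)
  finally have "ennreal (1 - d) \<le> ennreal (prob {\<omega>\<in>space M. (X \<omega>, Y \<omega>) \<in> A})"
    by (simp add: emeasure_eq_measure)
  thus ?thesis using False by (simp add: ennreal_le_iff)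
qed

lemma (in prob_space) prob_inter_ge:
  assumes "A \<in> events" "B \<in> events"
  shows "prob (A \<inter> B) \<ge> prob A + prob B - 1"
proof -
  have "prob A \<le> prob ((A \<inter> B) \<union> (space M - B))"
    using assms sets.sets_into_space by (intro finite_measure_mono) auto
  also have "\<dots> \<le> prob (A \<inter> B) + prob (space M - B)" using assms by (intro measure_Un_le) auto
  also have "prob (space M - B) = 1 - prob B" using assms by (intro prob_compl)
  finally show ?thesis by simp
qed

lemma final_alg:
  fixes S1 S2 S3 t1 t2 t3 :: real and N N0 N1 :: nat
  assumes "\<bar>S1\<bar> \<le> real N * t1" "\<bar>S2\<bar> \<le> real N0 * t2" "\<bar>S3\<bar> \<le> real N1 * t3"
    and "N > 0" "N0 > 0" "N1 > 0"
    and e1: "TE = c1 + S1 / real N" and e2: "AB = BM0 + S2 / real N0" and e3: "BM0 = MM + S3 / real N1"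
  shows "\<bar>(- 2 * TE + AB) - (- 2 * c1 + MM)\<bar> \<le> 2 * t1 + t2 + t3"
proof -
  have a1: "\<bar>S1 / real N\<bar> \<le> t1"
  proof -
    have "\<bar>S1 / real N\<bar> = \<bar>S1\<bar> / real N" by simp
    also have "\<dots> \<le> (real N * t1) / real N" using assms(1,4) by (intro divide_right_mono) auto
    also have "\<dots> = t1" using assms(1,4) by simp
    finally show ?thesis .
  qed
  have a2: "\<bar>S2 / real N0\<bar> \<le> t2"
  proof -
    have "\<bar>S2 / real N0\<bar> = \<bar>S2\<bar> / real N0" by simp
    also have "\<dots> \<le> (real N0 * t2) / real N0" using assms(2,5) by (intro divide_right_mono) auto
    also have "\<dots> = t2" using assms(2,5) by simp
    finally show ?thesis .
  qed
  have a3: "\<bar>S3 / real N1\<bar> \<le> t3"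
  proof -
    have "\<bar>S3 / real N1\<bar> = \<bar>S3\<bar> / real N1" by simp
    also have "\<dots> \<le> (real N1 * t3) / real N1" using assms(3,6) by (intro divide_right_mono) auto
    also have "\<dots> = t3" using assms(3,6) by simp
    finally show ?thesis .
  qed
  have "(- 2 * TE + AB) - (- 2 * c1 + MM) = - 2 * (S1 / real N) + S2 / real N0 + S3 / real N1"
    using e1 e2 e3 by simp
  thus ?thesis using a1 a2 a3 by linarith
qed

lemma sqrt_R4: "R > 0 \<Longrightarrow> sqrt (2 * (R\<^sup>2 * R\<^sup>2 * v) * ell / n) = R\<^sup>2 * sqrt (2 * v * ell / n)"
proof -
  assume "R > 0"
  have "2 * (R\<^sup>2 * R\<^sup>2 * v) * ell / n = (R\<^sup>2)\<^sup>2 * (2 * v * ell / n)" by (simp add: power2_eq_square)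
  hence "sqrt (2 * (R\<^sup>2 * R\<^sup>2 * v) * ell / n) = sqrt ((R\<^sup>2)\<^sup>2) * sqrt (2 * v * ell / n)"
    by (simp only: real_sqrt_mult)
  thus ?thesis by (simp only: real_sqrt_abs) simp
qed

lemma bnd1:
  fixes R ell :: real and N :: nat
  assumes "R > 0" "N > 0" "ell > 0"
  shows "2 * (sqrt (2 * (R\<^sup>2 * R\<^sup>2) * ell / real N) + 2 * (2 * R\<^sup>2) * ell / (3 * real N))
         \<le> R\<^sup>2 * (sqrt (16 / real N * ell) + 8 / (3 * real N) * ell)"
proof -
  have s: "sqrt (2 * (R\<^sup>2 * R\<^sup>2) * ell / real N) = R\<^sup>2 * sqrt (2 * ell / real N)"
    using sqrt_R4[OF assms(1), of 1 ell "real N"] by simp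
  have "2 * sqrt (2 * ell / real N) = sqrt (8 * ell / real N)"
  proof -
    have "sqrt (8 * ell / real N) = sqrt (2\<^sup>2 * (2 * ell / real N))" by (simp add: power2_eq_square)
    thus ?thesis by (simp only: real_sqrt_mult real_sqrt_abs)
  qed
  also have "\<dots> \<le> sqrt (16 / real N * ell)" using assms by (intro real_sqrt_le_mono) (simp add: divide_right_mono)
  finally have "2 * sqrt (2 * ell / real N) \<le> sqrt (16 / real N * ell)" .
  hence "R\<^sup>2 * (2 * sqrt (2 * ell / real N)) \<le> R\<^sup>2 * sqrt (16 / real N * ell)"
    by (intro mult_left_mono) auto
  thus ?thesis unfolding s by (simp add: algebra_simps)
qed

lemma bnd2:
  fixes R ell ell' v :: real and n :: nat
  assumes "R > 0" "n > 0" "ell > 0" "ell \<le> ell'" "v \<ge> 0"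
  shows "sqrt (2 * (R\<^sup>2 * R\<^sup>2 * v) * ell / real n) + 2 * (R\<^sup>2 * R\<^sup>2) * ell / (3 * real n)
         \<le> R\<^sup>2 * (sqrt (2 * v / real n * ell') + 2 * R\<^sup>2 / (3 * real n) * ell')"
proof -
  have "sqrt (2 * v * ell / real n) \<le> sqrt (2 * v / real n * ell')"
    using assms by (intro real_sqrt_le_mono) (simp add: divide_right_mono mult_left_mono)
  hence "R\<^sup>2 * sqrt (2 * v * ell / real n) \<le> R\<^sup>2 * sqrt (2 * v / real n * ell')" by (intro mult_left_mono) auto
  moreover have "2 * (R\<^sup>2 * R\<^sup>2) * ell / (3 * real n) \<le> R\<^sup>2 * (2 * R\<^sup>2 / (3 * real n) * ell')"
  proof -
    have "2 * (R\<^sup>2 * R\<^sup>2) * ell / (3 * real n) = R\<^sup>2 * (2 * R\<^sup>2 / (3 * real n) * ell)" by simp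
    also have "\<dots> \<le> R\<^sup>2 * (2 * R\<^sup>2 / (3 * real n) * ell')"
      using assms by (intro mult_left_mono) auto
    finally show ?thesis .
  qed
  ultimately show ?thesis unfolding sqrt_R4[OF assms(1)] by (simp add: algebra_simps)
qed

theorem theoremE2:
  fixes \<rho>0 :: "(real^'d) measure"
    and p :: "real^'d \<Rightarrow> real^'d \<Rightarrow> real"
    and X :: "(real^'d) set"
    and f g :: "real^'d \<Rightarrow> real^'k"
    and R \<delta> :: real
    and N N0 N1 :: nat
    and M :: "'w measure"
    and Z :: "nat \<Rightarrow> 'w \<Rightarrow> (real^'d) \<times> (real^'d)"
    and U W :: "nat \<Rightarrow> 'w \<Rightarrow> real^'d"
  assumes X_meas: "X \<in> sets lborel"
    and rho0_prob: "prob_space \<rho>0" and rho0_sets: "sets \<rho>0 = sets borel"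
    and rho0_X: "AE x in \<rho>0. x \<in> X"
    and p_meas: "(\<lambda>(x, x'). p x x') \<in> borel_measurable (borel \<Otimes>\<^sub>M borel)"
    and p_nonneg: "\<And>x x'. p x x' \<ge> 0"
    and p_normal: "\<And>x. x \<in> X \<Longrightarrow> (\<integral>\<^sup>+ x'. ennreal (indicator X x' * p x x') \<partial>lborel) = 1"
    and f_meas: "f \<in> borel_measurable borel" and g_meas: "g \<in> borel_measurable borel"
    and R_pos: "R > 0"
    and f_bdd: "AE x in \<rho>0. norm (f x) \<le> R"
    and g_bdd: "AE x' in future_dist (markov_joint \<rho>0 p X). norm (g x') \<le> R"
    and Vf_nz: "var_mat \<rho>0 f \<noteq> 0"
    and Vg_nz: "var_mat (future_dist (markov_joint \<rho>0 p X)) g \<noteq> 0"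
    and delta: "0 < \<delta>" "\<delta> < 1"
    and N_pos: "N > 0" and N0_pos: "N0 > 0" and N1_pos: "N1 > 0"
    and M_prob: "prob_space M"
    and Z_indep: "prob_space.indep_vars M (\<lambda>_. borel \<Otimes>\<^sub>M borel) Z {..<N}"
    and Z_dist: "\<And>t. t < N \<Longrightarrow> distr M (borel \<Otimes>\<^sub>M borel) (Z t) = markov_joint \<rho>0 p X"
    and U_indep: "prob_space.indep_vars M (\<lambda>_. borel) U {..<N0}"
    and U_dist: "\<And>i. i < N0 \<Longrightarrow> distr M borel (U i) = \<rho>0"
    and W_indep: "prob_space.indep_vars M (\<lambda>_. borel) W {..<N1}"
    and W_dist: "\<And>j. j < N1 \<Longrightarrow> distr M borel (W j) = future_dist (markov_joint \<rho>0 p X)"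
    and UW_indep: "prob_space.indep_var M
        (Pi\<^sub>M {..<N0} (\<lambda>_. borel)) (\<lambda>\<omega>. \<lambda>i\<in>{..<N0}. U i \<omega>)
        (Pi\<^sub>M {..<N1} (\<lambda>_. borel)) (\<lambda>\<omega>. \<lambda>j\<in>{..<N1}. W j \<omega>)"
  shows "measure M {\<omega> \<in> space M.
      \<bar>emp_lora f g (\<lambda>t. Z t \<omega>) N (\<lambda>i. U i \<omega>) N0 (\<lambda>j. W j \<omega>) N1
        - lora (markov_joint \<rho>0 p X) \<rho>0 (future_dist (markov_joint \<rho>0 p X)) f g\<bar>
      \<le> R\<^sup>2 * (sqrt (16 / real N * ln (6 / \<delta>)) + 8 / (3 * real N) * ln (6 / \<delta>)
          + sqrt (2 * opnorm (var_mat \<rho>0 f) / real N0 * ln (12 * intdim (var_mat \<rho>0 f) / \<delta>))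
          + 2 * R\<^sup>2 / (3 * real N0) * ln (12 * intdim (var_mat \<rho>0 f) / \<delta>)
          + sqrt (2 * opnorm (var_mat (future_dist (markov_joint \<rho>0 p X)) g) / real N1
                  * ln (12 * intdim (var_mat (future_dist (markov_joint \<rho>0 p X)) g) / \<delta>))
          + 2 * R\<^sup>2 / (3 * real N1)
                  * ln (12 * intdim (var_mat (future_dist (markov_joint \<rho>0 p X)) g) / \<delta>))}
    \<ge> 1 - \<delta>"
proof -
  define J where "J = markov_joint \<rho>0 p X"
  define \<rho>1 where "\<rho>1 = future_dist J"
  interpret M: prob_space M by (rule M_prob)
  have Zm[measurable]: "Z t \<in> measurable M (borel \<Otimes>\<^sub>M borel)" if "t < N" for t
    using Z_indep that unfolding M.indep_vars_def by auto
  have Um[measurable]: "U i \<in> borel_measurable M" if "i < N0" for i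
    using U_indep that unfolding M.indep_vars_def by auto
  have Wm[measurable]: "W j \<in> borel_measurable M" if "j < N1" for j
    using W_indep that unfolding M.indep_vars_def by auto
  have JZ: "J = distr M (borel \<Otimes>\<^sub>M borel) (Z 0)" using Z_dist[OF N_pos] by (simp add: J_def)
  have J_prob: "prob_space J" unfolding JZ by (rule M.prob_space_distr) (use N_pos in simp)
  have Js: "sets J = sets (borel \<Otimes>\<^sub>M borel)" unfolding JZ by simp
  have r1W: "\<rho>1 = distr M borel (W 0)" using W_dist[OF N1_pos] by (simp add: \<rho>1_def J_def)
  have r1_prob: "prob_space \<rho>1" unfolding r1W by (rule M.prob_space_distr) (use N1_pos in simp)
  have r1s: "sets \<rho>1 = sets borel" unfolding r1W by simp
  have fbJ: "AE z in J. norm (f (fst z)) \<le> R"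
    unfolding J_def by (rule markov_AE_fst[OF X_meas rho0_prob rho0_sets p_meas f_meas f_bdd])
  have sndm: "snd \<in> measurable J borel"
    by (subst measurable_cong_sets[OF Js refl]) simp
  have gbJ: "AE z in J. norm (g (snd z)) \<le> R"
  proof -
    have "AE x' in distr J borel snd. norm (g x') \<le> R" using g_bdd unfolding future_dist_def J_def .
    thus ?thesis using sndm g_meas by (subst (asm) AE_distr_iff) auto
  qed
  have fm0: "f \<in> borel_measurable \<rho>0" using f_meas by (subst measurable_cong_sets[OF rho0_sets refl])
  have gm1: "g \<in> borel_measurable \<rho>1" using g_meas by (subst measurable_cong_sets[OF r1s refl])
  have g_bdd1: "AE x in \<rho>1. norm (g x) \<le> R" unfolding \<rho>1_def J_def by (rule g_bdd)
  have GL3: "GLctx \<rho>0 \<rho>1 f g R"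
    using rho0_prob r1_prob fm0 gm1 f_bdd g_bdd1 R_pos by (intro GLctx.intro)
  interpret G3: GLctx \<rho>0 \<rho>1 f g R by (rule GL3)
  have GLf: "GLctx \<rho>1 \<rho>0 g f R"
    using rho0_prob r1_prob fm0 gm1 f_bdd g_bdd1 R_pos by (intro GLctx.intro)
  interpret Gf: GLctx \<rho>1 \<rho>0 g f R by (rule GLf)
  have Vf_pos: "opnorm (var_mat \<rho>0 f) > 0" by (rule Gf.opnorm_pos[OF Vf_nz])
  have Vg_nz': "var_mat \<rho>1 g \<noteq> 0" unfolding \<rho>1_def J_def by (rule Vg_nz)
  have Vg_pos: "opnorm (var_mat \<rho>1 g) > 0" by (rule G3.opnorm_pos[OF Vg_nz'])
  have rf: "intdim (var_mat \<rho>0 f) \<ge> 1" by (rule Gf.intdim_ge1[OF Vf_nz])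
  have rg: "intdim (var_mat \<rho>1 g) \<ge> 1" by (rule G3.intdim_ge1[OF Vg_nz'])
  define ell where "ell = ln (6 / \<delta>)"
  have ell_pos: "ell > 0" unfolding ell_def using delta by simp
  have exp_ell: "2 * exp (- ell) = \<delta> / 3" unfolding ell_def using delta by (simp add: exp_minus)
  have Zd: "distr M (borel \<Otimes>\<^sub>M borel) (Z t) = J" if "t < N" for t using Z_dist[OF that] by (simp add: J_def)
  have Wd: "distr M borel (W j) = \<rho>1" if "j < N1" for j using W_dist[OF that] by (simp add: \<rho>1_def J_def)
  define t1 where "t1 = sqrt (2 * (R\<^sup>2 * R\<^sup>2) * ell / real N) + 2 * (2 * R\<^sup>2) * ell / (3 * real N)"
  define E1 where "E1 = {\<omega>\<in>space M. \<bar>\<Sum>t<N. (f (fst (Z t \<omega>)) \<bullet> g (snd (Z t \<omega>)) - trace (cross_mom J f g))\<bar> \<le> real N * t1}"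
  have P1: "measure M E1 \<ge> 1 - \<delta> / 3"
    using scalar_bernstein[OF M_prob J_prob Js f_meas g_meas fbJ gbJ R_pos N_pos Z_indep Zd ell_pos]
    unfolding E1_def t1_def exp_ell by simp
  define t3 where "t3 = sqrt (2 * (R\<^sup>2 * R\<^sup>2 * opnorm (var_mat \<rho>1 g)) * ell / real N1) + 2 * (R\<^sup>2 * R\<^sup>2) * ell / (3 * real N1)"
  define E3 where "E3 = {\<omega>\<in>space M. \<bar>\<Sum>j<N1. (trace (sec_mom \<rho>0 f ** outer (g (W j \<omega>)) (g (W j \<omega>))) - trace (sec_mom \<rho>0 f ** sec_mom \<rho>1 g))\<bar> \<le> real N1 * t3}"
  have P3: "measure M E3 \<ge> 1 - \<delta> / 3"
    using sample_bernstein[OF M_prob GL3 r1s Vg_nz' N1_pos W_indep Wd ell_pos]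
    unfolding E3_def t3_def exp_ell by simp
  define M0 where "M0 = sec_mom \<rho>0 f"
  define t2 where "t2 = sqrt (2 * (R\<^sup>2 * R\<^sup>2 * opnorm (var_mat \<rho>0 f)) * ell / real N0) + 2 * (R\<^sup>2 * R\<^sup>2) * ell / (3 * real N0)"
  define PU where "PU = Pi\<^sub>M {..<N0} (\<lambda>_. borel :: (real^'d) measure)"
  define PW where "PW = Pi\<^sub>M {..<N1} (\<lambda>_. borel :: (real^'d) measure)"
  define A where "A = {uw \<in> space (PU \<Otimes>\<^sub>M PW). (\<forall>j\<in>{..<N1}. norm (g (snd uw j)) \<le> R) \<longrightarrow>
       \<bar>\<Sum>i<N0. (trace (emp_mom g (snd uw) N1 ** outer (f (fst uw i)) (f (fst uw i))) - trace (emp_mom g (snd uw) N1 ** M0))\<bar> \<le> real N0 * t2}"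
  note [measurable] = f_meas g_meas
  have A_sets: "A \<in> sets (PU \<Otimes>\<^sub>M PW)" unfolding A_def PU_def PW_def emp_mom_def by measurable
  define Uv where "Uv \<omega> = (\<lambda>i\<in>{..<N0}. U i \<omega>)" for \<omega>
  define Wv where "Wv \<omega> = (\<lambda>j\<in>{..<N1}. W j \<omega>)" for \<omega>
  have Uvm: "Uv \<in> measurable M PU" unfolding Uv_def PU_def by measurable
  define E2 where "E2 = {\<omega>\<in>space M. (Uv \<omega>, Wv \<omega>) \<in> A}"
  have UWi: "M.indep_var PU Uv PW Wv" using UW_indep unfolding PU_def PW_def Uv_def[abs_def] Wv_def[abs_def] .
  have P2: "measure M E2 \<ge> 1 - \<delta> / 3"
    unfolding E2_def
  proof (rule M.indep_section_bound[OF UWi A_sets])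
    fix w assume w: "w \<in> space PW"
    have secm: "{\<omega>\<in>space M. (Uv \<omega>, w) \<in> A} \<in> sets M"
    proof -
      have "(\<lambda>\<omega>. (Uv \<omega>, w)) \<in> measurable M (PU \<Otimes>\<^sub>M PW)"
        using Uvm w by (intro measurable_Pair) auto
      hence "(\<lambda>\<omega>. (Uv \<omega>, w)) -` A \<inter> space M \<in> sets M" using A_sets by (rule measurable_sets)
      moreover have "(\<lambda>\<omega>. (Uv \<omega>, w)) -` A \<inter> space M = {\<omega>\<in>space M. (Uv \<omega>, w) \<in> A}" by auto
      ultimately show ?thesis by simp
    qed
    have inspace: "(Uv \<omega>, w) \<in> space (PU \<Otimes>\<^sub>M PW)" for \<omega>
      using w unfolding PU_def Uv_def by (simp add: space_pair_measure space_PiM)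
    show "measure M {\<omega>\<in>space M. (Uv \<omega>, w) \<in> A} \<ge> 1 - \<delta> / 3"
    proof (cases "\<forall>j\<in>{..<N1}. norm (g (w j)) \<le> R")
      case True
      define \<nu> where "\<nu> = measure_pmf (map_pmf w (pmf_of_set {..<N1}))"
      have setw: "set_pmf (map_pmf w (pmf_of_set {..<N1})) = w ` {..<N1}"
      proof -
        have "set_pmf (pmf_of_set {..<N1}) = {..<N1}" using N1_pos by (intro set_pmf_of_set) auto
        thus ?thesis by simp
      qed
      have GLw: "GLctx \<nu> \<rho>0 g f R"
      proof (intro GLctx.intro)
        show "prob_space \<nu>" unfolding \<nu>_def by (rule prob_space_measure_pmf)
        show "g \<in> borel_measurable \<nu>" unfolding \<nu>_def by simp
        show "AE y in \<nu>. norm (g y) \<le> R" unfolding \<nu>_def by (rule AE_pmfI) (use True setw in auto)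
      qed (use rho0_prob fm0 f_bdd R_pos in auto)
      have Bw: "sec_mom \<nu> g = emp_mom g w N1" unfolding \<nu>_def by (rule emp_mom_pmf[OF N1_pos, symmetric])
      have sb: "measure M {\<omega>\<in>space M. \<bar>\<Sum>i<N0. (trace (sec_mom \<nu> g ** outer (f (U i \<omega>)) (f (U i \<omega>)))
              - trace (sec_mom \<nu> g ** sec_mom \<rho>0 f))\<bar> \<le> real N0 * t2} \<ge> 1 - \<delta> / 3"
        using sample_bernstein[OF M_prob GLw rho0_sets Vf_nz N0_pos U_indep U_dist ell_pos]
        unfolding t2_def exp_ell by simp
      have sub: "{\<omega>\<in>space M. \<bar>\<Sum>i<N0. (trace (sec_mom \<nu> g ** outer (f (U i \<omega>)) (f (U i \<omega>)))
              - trace (sec_mom \<nu> g ** sec_mom \<rho>0 f))\<bar> \<le> real N0 * t2} \<subseteq> {\<omega>\<in>space M. (Uv \<omega>, w) \<in> A}"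
        unfolding A_def Bw M0_def using inspace by (auto simp: Uv_def)
      have "measure M {\<omega>\<in>space M. \<bar>\<Sum>i<N0. (trace (sec_mom \<nu> g ** outer (f (U i \<omega>)) (f (U i \<omega>)))
              - trace (sec_mom \<nu> g ** sec_mom \<rho>0 f))\<bar> \<le> real N0 * t2} \<le> measure M {\<omega>\<in>space M. (Uv \<omega>, w) \<in> A}"
        by (rule M.finite_measure_mono[OF sub secm])
      thus ?thesis using sb by linarith
    next
      case False
      hence "{\<omega>\<in>space M. (Uv \<omega>, w) \<in> A} = space M" unfolding A_def using inspace by auto
      thus ?thesis using delta by (simp add: M.prob_space)
    qed
  qed
  have Zm'[measurable]: "Z t \<in> measurable M (borel \<Otimes>\<^sub>M borel)" if "t \<in> {..<N}" for t using Zm that by auto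
  have Um'[measurable]: "U i \<in> borel_measurable M" if "i \<in> {..<N0}" for i using Um that by auto
  have Wm'[measurable]: "W j \<in> borel_measurable M" if "j \<in> {..<N1}" for j using Wm that by auto
  define Ebd where "Ebd = {\<omega>\<in>space M. \<forall>j\<in>{..<N1}. norm (g (W j \<omega>)) \<le> R}"
  have Ebd_ev: "Ebd \<in> sets M" unfolding Ebd_def by measurable
  have Pbd: "measure M Ebd = 1"
  proof -
    have "AE \<omega> in M. \<forall>j\<in>{..<N1}. norm (g (W j \<omega>)) \<le> R"
    proof (rule AE_finite_allI)
      fix j assume j: "j \<in> {..<N1}"
      have "AE x in distr M borel (W j). norm (g x) \<le> R" unfolding Wd[of j, OF j[simplified]] by (rule g_bdd1)
      thus "AE \<omega> in M. norm (g (W j \<omega>)) \<le> R" using j by (subst (asm) AE_distr_iff) auto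
    qed simp
    thus ?thesis unfolding Ebd_def by (subst M.prob_Collect_eq_1[OF Ebd_ev[unfolded Ebd_def]])
  qed
  have E1_ev: "E1 \<in> sets M" unfolding E1_def by measurable
  have E3_ev: "E3 \<in> sets M" unfolding E3_def by measurable
  have Wvm: "Wv \<in> measurable M PW" unfolding Wv_def PW_def by measurable
  have E2_ev: "E2 \<in> sets M"
  proof -
    have "(\<lambda>\<omega>. (Uv \<omega>, Wv \<omega>)) \<in> measurable M (PU \<Otimes>\<^sub>M PW)" using Uvm Wvm by (rule measurable_Pair)
    hence "(\<lambda>\<omega>. (Uv \<omega>, Wv \<omega>)) -` A \<inter> space M \<in> sets M" using A_sets by (rule measurable_sets)
    moreover have "(\<lambda>\<omega>. (Uv \<omega>, Wv \<omega>)) -` A \<inter> space M = E2" unfolding E2_def by auto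
    ultimately show ?thesis by simp
  qed
  have Pall: "measure M (E1 \<inter> E2 \<inter> E3 \<inter> Ebd) \<ge> 1 - \<delta>"
  proof -
    have i1: "measure M (E1 \<inter> E2) \<ge> measure M E1 + measure M E2 - 1" by (rule M.prob_inter_ge[OF E1_ev E2_ev])
    have i2: "measure M (E1 \<inter> E2 \<inter> E3) \<ge> measure M (E1 \<inter> E2) + measure M E3 - 1"
      by (rule M.prob_inter_ge) (use E1_ev E2_ev E3_ev in auto)
    have i3: "measure M (E1 \<inter> E2 \<inter> E3 \<inter> Ebd) \<ge> measure M (E1 \<inter> E2 \<inter> E3) + measure M Ebd - 1"
      by (rule M.prob_inter_ge) (use E1_ev E2_ev E3_ev Ebd_ev in auto)
    show ?thesis using i1 i2 i3 P1 P2 P3 Pbd by linarith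
  qed
  have ellf: "ell \<le> ln (12 * intdim (var_mat \<rho>0 f) / \<delta>)"
    unfolding ell_def using delta rf by (intro ln_mono) (auto simp: divide_right_mono)
  have ellg: "ell \<le> ln (12 * intdim (var_mat \<rho>1 g) / \<delta>)"
    unfolding ell_def using delta rg by (intro ln_mono) (auto simp: divide_right_mono)
  define RHS where "RHS = R\<^sup>2 * (sqrt (16 / real N * ln (6 / \<delta>)) + 8 / (3 * real N) * ln (6 / \<delta>)
          + sqrt (2 * opnorm (var_mat \<rho>0 f) / real N0 * ln (12 * intdim (var_mat \<rho>0 f) / \<delta>))
          + 2 * R\<^sup>2 / (3 * real N0) * ln (12 * intdim (var_mat \<rho>0 f) / \<delta>)
          + sqrt (2 * opnorm (var_mat \<rho>1 g) / real N1
                  * ln (12 * intdim (var_mat \<rho>1 g) / \<delta>))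
          + 2 * R\<^sup>2 / (3 * real N1)
                  * ln (12 * intdim (var_mat \<rho>1 g) / \<delta>))"
  have tsum: "2 * t1 + t2 + t3 \<le> RHS"
  proof -
    have b1: "2 * t1 \<le> R\<^sup>2 * (sqrt (16 / real N * ell) + 8 / (3 * real N) * ell)"
      unfolding t1_def by (rule bnd1[OF R_pos N_pos ell_pos])
    have b2: "t2 \<le> R\<^sup>2 * (sqrt (2 * opnorm (var_mat \<rho>0 f) / real N0 * ln (12 * intdim (var_mat \<rho>0 f) / \<delta>))
          + 2 * R\<^sup>2 / (3 * real N0) * ln (12 * intdim (var_mat \<rho>0 f) / \<delta>))"
      unfolding t2_def by (rule bnd2[OF R_pos N0_pos ell_pos ellf]) (use Vf_pos in simp)
    have b3: "t3 \<le> R\<^sup>2 * (sqrt (2 * opnorm (var_mat \<rho>1 g) / real N1 * ln (12 * intdim (var_mat \<rho>1 g) / \<delta>))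
          + 2 * R\<^sup>2 / (3 * real N1) * ln (12 * intdim (var_mat \<rho>1 g) / \<delta>))"
      unfolding t3_def by (rule bnd2[OF R_pos N1_pos ell_pos ellg]) (use Vg_pos in simp)
    show ?thesis using b1 b2 b3 unfolding RHS_def ell_def by (simp add: algebra_simps)
  qed
  have sub: "E1 \<inter> E2 \<inter> E3 \<inter> Ebd \<subseteq> {\<omega> \<in> space M.
      \<bar>emp_lora f g (\<lambda>t. Z t \<omega>) N (\<lambda>i. U i \<omega>) N0 (\<lambda>j. W j \<omega>) N1 - lora J \<rho>0 \<rho>1 f g\<bar> \<le> RHS}"
  proof
    fix \<omega> assume \<omega>: "\<omega> \<in> E1 \<inter> E2 \<inter> E3 \<inter> Ebd"
    hence \<omega>s: "\<omega> \<in> space M" by (simp add: E1_def)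
    define S1 where "S1 = (\<Sum>t<N. (f (fst (Z t \<omega>)) \<bullet> g (snd (Z t \<omega>)) - trace (cross_mom J f g)))"
    define B where "B = emp_mom g (\<lambda>j. W j \<omega>) N1"
    define A0 where "A0 = emp_mom f (\<lambda>i. U i \<omega>) N0"
    define M1 where "M1 = sec_mom \<rho>1 g"
    define S2 where "S2 = (\<Sum>i<N0. (trace (B ** outer (f (U i \<omega>)) (f (U i \<omega>))) - trace (B ** M0)))"
    define S3 where "S3 = (\<Sum>j<N1. (trace (M0 ** outer (g (W j \<omega>)) (g (W j \<omega>))) - trace (M0 ** M1)))"
    have h1: "\<bar>S1\<bar> \<le> real N * t1" using \<omega> unfolding E1_def S1_def by auto
    have h3: "\<bar>S3\<bar> \<le> real N1 * t3" using \<omega> unfolding E3_def S3_def M0_def M1_def by auto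
    have BWv: "emp_mom g (Wv \<omega>) N1 = B"
      unfolding B_def emp_mom_def Wv_def by (intro arg_cong[where f="\<lambda>x. _ *\<^sub>R x"] sum.cong) auto
    have h2: "\<bar>S2\<bar> \<le> real N0 * t2"
    proof -
      have inA: "(Uv \<omega>, Wv \<omega>) \<in> A" using \<omega> unfolding E2_def by auto
      have bd: "\<forall>j\<in>{..<N1}. norm (g (snd (Uv \<omega>, Wv \<omega>) j)) \<le> R" using \<omega> unfolding Ebd_def Wv_def by auto
      have "\<bar>\<Sum>i<N0. (trace (emp_mom g (snd (Uv \<omega>, Wv \<omega>)) N1 ** outer (f (fst (Uv \<omega>, Wv \<omega>) i)) (f (fst (Uv \<omega>, Wv \<omega>) i)))
              - trace (emp_mom g (snd (Uv \<omega>, Wv \<omega>)) N1 ** M0))\<bar> \<le> real N0 * t2"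
        using inA bd unfolding A_def by blast
      moreover have "(\<Sum>i<N0. (trace (emp_mom g (snd (Uv \<omega>, Wv \<omega>)) N1 ** outer (f (fst (Uv \<omega>, Wv \<omega>) i)) (f (fst (Uv \<omega>, Wv \<omega>) i)))
              - trace (emp_mom g (snd (Uv \<omega>, Wv \<omega>)) N1 ** M0))) = S2"
        unfolding S2_def BWv snd_conv fst_conv by (intro sum.cong) (auto simp: Uv_def)
      ultimately show ?thesis by simp
    qed
    have e1: "trace (emp_cross f g (\<lambda>t. Z t \<omega>) N) = trace (cross_mom J f g) + S1 / real N"
      unfolding trace_emp_cross S1_def using N_pos by (simp add: sum_subtractf field_simps)
    have e2: "trace (A0 ** B) = trace (B ** M0) + S2 / real N0"
    proof -
      have "trace (A0 ** B) = trace (B ** A0)" by (rule trace_mul_sym)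
      thus ?thesis unfolding A0_def trace_emp_mom S2_def using N0_pos by (simp add: sum_subtractf field_simps)
    qed
    have e3: "trace (B ** M0) = trace (M0 ** M1) + S3 / real N1"
    proof -
      have "trace (B ** M0) = trace (M0 ** B)" by (rule trace_mul_sym)
      thus ?thesis unfolding B_def trace_emp_mom S3_def using N1_pos by (simp add: sum_subtractf field_simps)
    qed
    have "\<bar>(- 2 * trace (emp_cross f g (\<lambda>t. Z t \<omega>) N) + trace (A0 ** B)) - (- 2 * trace (cross_mom J f g) + trace (M0 ** M1))\<bar>
          \<le> 2 * t1 + t2 + t3"
      by (rule final_alg[OF h1 h2 h3 N_pos N0_pos N1_pos e1 e2 e3])
    also have "\<dots> \<le> RHS" by (rule tsum)
    finally show "\<omega> \<in> {\<omega> \<in> space M.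
      \<bar>emp_lora f g (\<lambda>t. Z t \<omega>) N (\<lambda>i. U i \<omega>) N0 (\<lambda>j. W j \<omega>) N1 - lora J \<rho>0 \<rho>1 f g\<bar> \<le> RHS}"
      using \<omega>s unfolding emp_lora_def lora_def A0_def B_def M0_def M1_def by simp
  qed
  have tgt_ev: "{\<omega> \<in> space M.
      \<bar>emp_lora f g (\<lambda>t. Z t \<omega>) N (\<lambda>i. U i \<omega>) N0 (\<lambda>j. W j \<omega>) N1 - lora J \<rho>0 \<rho>1 f g\<bar> \<le> RHS} \<in> sets M"
    unfolding emp_lora_def emp_cross_def emp_mom_def by measurable
  have "measure M {\<omega> \<in> space M.
      \<bar>emp_lora f g (\<lambda>t. Z t \<omega>) N (\<lambda>i. U i \<omega>) N0 (\<lambda>j. W j \<omega>) N1 - lora J \<rho>0 \<rho>1 f g\<bar> \<le> RHS} \<ge> 1 - \<delta>"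
    using M.finite_measure_mono[OF sub tgt_ev] Pall by linarith
  thus ?thesis unfolding RHS_def \<rho>1_def J_def .
qed

end
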